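(* Let $G$ be a graph whose edge set is partitioned into the edge sets of $f$ degree-2 paths, each of length at least $f-1$. Then $G$ is geometric 1-planar.
   Context: Graphs are finite and simple. A degree-2 path in $G$ is a simple path all of whose internal vertices have degree two in $G$; its length is its number of edges. An embedding of a graph maps vertices to distinct points of $\mathbb{R}^2$ and each edge to a Jordan arc between its endpoints, such that edges intersect only at common endpoints or in proper crossings. A graph is geometric 1-planar if it admits an embedding in which every edge is a straight-line segment and every edge is crossed at most once. *)

theory Defs
  imports "HOL-Analysis.Analysis"
begin

definition simple_graph :: "'a set \<Rightarrow> 'a set set \<Rightarrow> bool" where
  "simple_graph V E \<longleftrightarrow> finite V \<and>
     (\<forall>e\<in>E. \<exists>u v. u \<noteq> v \<and> u \<in> V \<and> v \<in> V \<and> e = {u, v})"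

definition degree :: "'a set set \<Rightarrow> 'a \<Rightarrow> nat" where
  "degree E v = card {e \<in> E. v \<in> e}"

definition path_edges :: "'a list \<Rightarrow> 'a set set" where
  "path_edges ps = {{ps ! i, ps ! Suc i} | i. Suc i < length ps}"

definition path_length :: "'a list \<Rightarrow> nat" where
  "path_length ps = length ps - 1"

definition degree2_path :: "'a set \<Rightarrow> 'a set set \<Rightarrow> 'a list \<Rightarrow> bool" where
  "degree2_path V E ps \<longleftrightarrow> ps \<noteq> [] \<and> distinct ps \<and> set ps \<subseteq> V \<and>
     (\<forall>i. Suc i < length ps \<longrightarrow> {ps ! i, ps ! Suc i} \<in> E) \<and>
     (\<forall>i. 0 < i \<and> Suc i < length ps \<longrightarrow> degree E (ps ! i) = 2)"

definition seg :: "('a \<Rightarrow> real^2) \<Rightarrow> 'a set \<Rightarrow> (real^2) set" where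
  "seg p e = convex hull (p ` e)"

definition straight_line_embedding :: "'a set \<Rightarrow> 'a set set \<Rightarrow> ('a \<Rightarrow> real^2) \<Rightarrow> bool" where
  "straight_line_embedding V E p \<longleftrightarrow> inj_on p V \<and>
     (\<forall>e\<in>E. \<forall>w\<in>V. w \<notin> e \<longrightarrow> p w \<notin> seg p e) \<and>
     (\<forall>e\<in>E. \<forall>e'\<in>E. e \<noteq> e' \<longrightarrow>
        (e \<inter> e' \<noteq> {} \<longrightarrow> seg p e \<inter> seg p e' = p ` (e \<inter> e')) \<and>
        (e \<inter> e' = {} \<longrightarrow> (\<exists>x. seg p e \<inter> seg p e' \<subseteq> {x})))"

definition crossing_edges :: "'a set set \<Rightarrow> ('a \<Rightarrow> real^2) \<Rightarrow> 'a set \<Rightarrow> 'a set set" where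
  "crossing_edges E p e = {e' \<in> E. e \<inter> e' = {} \<and> seg p e \<inter> seg p e' \<noteq> {}}"

definition geometric_1_planar :: "'a set \<Rightarrow> 'a set set \<Rightarrow> bool" where
  "geometric_1_planar V E \<longleftrightarrow> (\<exists>p. straight_line_embedding V E p \<and>
     (\<forall>e\<in>E. card (crossing_edges E p e) \<le> 1))"

end

theory Submission
  imports Defs "HOL-Analysis.Analysis"
begin


definition pt :: "real \<Rightarrow> real \<Rightarrow> real^2" where "pt x y = vector [x, y]"

lemma pt_eq[simp]: "pt x y = pt x' y' \<longleftrightarrow> x = x' \<and> y = y'"
  unfolding pt_def by (auto simp: vec_eq_iff forall_2)

lemma pt_comb: "(1 - u) *\<^sub>R pt x y + u *\<^sub>R pt x' y' = pt ((1-u)*x + u*x') ((1-u)*y+u*y')"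
  unfolding pt_def by (auto simp: vec_eq_iff forall_2)

lemma seg_line:
  assumes "x1 \<le> x2"
  shows "closed_segment (pt x1 (m*x1+c)) (pt x2 (m*x2+c)) = (\<lambda>x. pt x (m*x+c)) ` {x1..x2}"
proof
  show "closed_segment (pt x1 (m*x1+c)) (pt x2 (m*x2+c)) \<subseteq> (\<lambda>x. pt x (m*x+c)) ` {x1..x2}"
  proof
    fix z assume "z \<in> closed_segment (pt x1 (m*x1+c)) (pt x2 (m*x2+c))"
    then obtain u where u: "0 \<le> u" "u \<le> 1" "z = (1 - u) *\<^sub>R pt x1 (m*x1+c) + u *\<^sub>R pt x2 (m*x2+c)"
      unfolding closed_segment_def by auto
    let ?x = "(1-u)*x1 + u*x2"
    have "z = pt ?x ((1-u)*(m*x1+c)+u*(m*x2+c))" using u(3) pt_comb by metis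
    also have "(1-u)*(m*x1+c)+u*(m*x2+c) = m*?x+c" by (simp add: algebra_simps)
    finally have "z = pt ?x (m*?x+c)" .
    have e1: "?x - x1 = u*(x2-x1)" by (simp add: algebra_simps)
    have e1': "x2 - ?x = (1-u)*(x2-x1)" by (simp add: algebra_simps)
    have e2: "u*(x2-x1) \<ge> 0" "(1-u)*(x2-x1) \<ge> 0" using u assms by simp_all
    have "x1 \<le> ?x" using e1 e2(1) by linarith
    moreover have "?x \<le> x2" using e1' e2(2) by linarith
    ultimately have "?x \<in> {x1..x2}" by simp
    with \<open>z = pt ?x (m*?x+c)\<close> show "z \<in> (\<lambda>x. pt x (m*x+c)) ` {x1..x2}" by blast
  qed
next
  show "(\<lambda>x. pt x (m*x+c)) ` {x1..x2} \<subseteq> closed_segment (pt x1 (m*x1+c)) (pt x2 (m*x2+c))"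
  proof
    fix z assume "z \<in> (\<lambda>x. pt x (m*x+c)) ` {x1..x2}"
    then obtain x where x: "x1 \<le> x" "x \<le> x2" "z = pt x (m*x+c)" by auto
    show "z \<in> closed_segment (pt x1 (m*x1+c)) (pt x2 (m*x2+c))"
    proof (cases "x1 = x2")
      case True then show ?thesis using x by auto
    next
      case False
      define u where "u = (x - x1)/(x2 - x1)"
      have u: "0 \<le> u" "u \<le> 1" using x False assms by (auto simp: u_def divide_simps)
      have "u*(x2-x1) = x - x1" using False unfolding u_def by (simp add: divide_simps)
      then have "(1-u)*x1 + u*x2 = x" by (simp add: algebra_simps)
      moreover have "(1-u)*(m*x1+c)+u*(m*x2+c) = m*((1-u)*x1 + u*x2)+c" by (simp add: algebra_simps)
      ultimately have "z = (1 - u) *\<^sub>R pt x1 (m*x1+c) + u *\<^sub>R pt x2 (m*x2+c)"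
        using x by (simp only: pt_comb)
      then show ?thesis using u unfolding closed_segment_def by auto
    qed
  qed
qed


lemma path_edges_alt: "path_edges ps = (\<lambda>i. {ps ! i, ps ! Suc i}) ` {i. Suc i < length ps}"
  unfolding path_edges_def by auto

locale G0 =
  fixes V :: "'a set" and E :: "'a set set" and f :: nat and P :: "nat \<Rightarrow> 'a list"
  assumes sg: "simple_graph V E"
    and dp: "\<forall>i<f. degree2_path V E (P i)"
    and len: "\<forall>i<f. path_length (P i) \<ge> f - 1"
    and disj: "\<forall>i<f. \<forall>j<f. i \<noteq> j \<longrightarrow> path_edges (P i) \<inter> path_edges (P j) = {}"
    and un: "(\<Union>i<f. path_edges (P i)) = E"
    and long: "\<forall>i<f. length (P i) \<ge> 2"
begin

definition Ln :: "nat \<Rightarrow> nat" where "Ln j = length (P j) - 1"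
definition eo :: "nat \<Rightarrow> nat \<Rightarrow> 'a set" where "eo j k = {P j ! k, P j ! Suc k}"

lemma finV: "finite V" using sg unfolding simple_graph_def by auto

lemma E_sub: "E \<subseteq> Pow V" using sg unfolding simple_graph_def by auto

lemma finE: "finite E" using E_sub finV by (meson finite_Pow_iff finite_subset)

lemma Ln_ge1: "j < f \<Longrightarrow> Ln j \<ge> 1" using long unfolding Ln_def by force

lemma Ln_ge: "j < f \<Longrightarrow> Ln j \<ge> f - 1" using len unfolding Ln_def path_length_def by auto

lemma len_eq: "j < f \<Longrightarrow> length (P j) = Suc (Ln j)" using long unfolding Ln_def by force

lemma dist: "j < f \<Longrightarrow> distinct (P j)" using dp unfolding degree2_path_def by auto

lemma inV: "j < f \<Longrightarrow> k \<le> Ln j \<Longrightarrow> P j ! k \<in> V"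
  using dp len_eq[of j] unfolding degree2_path_def by (metis le_imp_less_Suc nth_mem subsetD)

lemma eo_in_pe: "j < f \<Longrightarrow> k < Ln j \<Longrightarrow> eo j k \<in> path_edges (P j)"
  unfolding eo_def path_edges_def using len_eq[of j] by auto

lemma eo_in_E: "j < f \<Longrightarrow> k < Ln j \<Longrightarrow> eo j k \<in> E"
  using eo_in_pe un by blast

lemma E_eo: "e \<in> E \<Longrightarrow> \<exists>j k. j < f \<and> k < Ln j \<and> e = eo j k"
proof -
  assume "e \<in> E"
  then obtain j where j: "j < f" "e \<in> path_edges (P j)" using un by blast
  then obtain i where "Suc i < length (P j)" "e = {P j ! i, P j ! Suc i}" unfolding path_edges_def by auto
  then show ?thesis using j len_eq[of j] unfolding eo_def by (intro exI[of _ j] exI[of _ i]) auto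
qed

lemma nth_inj: "j < f \<Longrightarrow> k \<le> Ln j \<Longrightarrow> k' \<le> Ln j \<Longrightarrow> P j ! k = P j ! k' \<Longrightarrow> k = k'"
  using dist[of j] len_eq[of j] by (simp add: nth_eq_iff_index_eq)

lemma eo_neq: "j < f \<Longrightarrow> k < Ln j \<Longrightarrow> P j ! k \<noteq> P j ! Suc k"
  using nth_inj[of j k "Suc k"] by auto

lemma eo_inj_k: "j < f \<Longrightarrow> k < Ln j \<Longrightarrow> k' < Ln j \<Longrightarrow> eo j k = eo j k' \<Longrightarrow> k = k'"
proof -
  assume a: "j < f" "k < Ln j" "k' < Ln j" "eo j k = eo j k'"
  then have "P j ! k = P j ! k' \<or> P j ! k = P j ! Suc k'" unfolding eo_def by (auto simp: doubleton_eq_iff)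
  then show "k = k'"
  proof
    assume "P j ! k = P j ! k'" then show ?thesis using nth_inj[of j k k'] a by auto
  next
    assume h: "P j ! k = P j ! Suc k'"
    then have "k = Suc k'" using nth_inj[of j k "Suc k'"] a by auto
    moreover have "P j ! Suc k = P j ! k'" using a(4) h a eo_neq[of j k'] unfolding eo_def by (auto simp: doubleton_eq_iff)
    then have "Suc k = k'" using nth_inj[of j "Suc k" k'] a by auto
    ultimately show ?thesis by simp
  qed
qed

lemma eo_inj: "j < f \<Longrightarrow> j' < f \<Longrightarrow> k < Ln j \<Longrightarrow> k' < Ln j' \<Longrightarrow> eo j k = eo j' k' \<Longrightarrow> j = j' \<and> k = k'"
proof -
  assume a: "j < f" "j' < f" "k < Ln j" "k' < Ln j'" "eo j k = eo j' k'"
  have "j = j'"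
  proof (rule ccontr)
    assume "j \<noteq> j'"
    then have "path_edges (P j) \<inter> path_edges (P j') = {}" using disj a by auto
    moreover have "eo j k \<in> path_edges (P j)" using eo_in_pe[OF a(1) a(3)] .
    moreover have "eo j' k' \<in> path_edges (P j')" using eo_in_pe a by auto
    then have "eo j k \<in> path_edges (P j')" using a(5) by simp
    ultimately show False by blast
  qed
  then show ?thesis using eo_inj_k a by auto
qed

lemma deg2: "j < f \<Longrightarrow> 0 < k \<Longrightarrow> k < Ln j \<Longrightarrow> degree E (P j ! k) = 2"
  using dp len_eq[of j] unfolding degree2_path_def by auto

lemma two_elem: "finite A \<Longrightarrow> card A = 2 \<Longrightarrow> x \<in> A \<Longrightarrow> y \<in> A \<Longrightarrow> x \<noteq> y \<Longrightarrow> A = {x, y}"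
  by (metis card_2_iff doubleton_eq_iff insertE singletonD)

lemma internal_edges:
  assumes "j < f" "0 < k" "k < Ln j"
  shows "{e \<in> E. P j ! k \<in> e} = {eo j (k - 1), eo j k}"
proof (rule two_elem)
  show "finite {e \<in> E. P j ! k \<in> e}" using finE by auto
  show "card {e \<in> E. P j ! k \<in> e} = 2" using deg2 assms unfolding degree_def by auto
  show "eo j (k - 1) \<in> {e \<in> E. P j ! k \<in> e}" using assms eo_in_E[of j "k-1"] unfolding eo_def by auto
  show "eo j k \<in> {e \<in> E. P j ! k \<in> e}" using assms eo_in_E[of j "k"] unfolding eo_def by auto
  show "eo j (k - 1) \<noteq> eo j k"
  proof
    assume "eo j (k - 1) = eo j k"
    then have "k - 1 = k" using eo_inj_k[of j "k-1" k] assms by linarith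
    then show False using assms by linarith
  qed
qed

lemma vertex_edge: "j < f \<Longrightarrow> k \<le> Ln j \<Longrightarrow> \<exists>k'. k' < Ln j \<and> P j ! k \<in> eo j k'"
proof -
  assume a: "j < f" "k \<le> Ln j"
  show ?thesis
  proof (cases "k < Ln j")
    case True then show ?thesis unfolding eo_def by auto
  next
    case False then have "k = Ln j" using a by auto
    then show ?thesis using Ln_ge1[OF a(1)] unfolding eo_def
      by (intro exI[of _ "k - 1"]) auto
  qed
qed

lemma internal_unique:
  assumes "j < f" "0 < k" "k < Ln j" "j' < f" "k' \<le> Ln j'" "P j ! k = P j' ! k'"
  shows "j' = j \<and> k' = k"
proof -
  have jj: "j' = j"
  proof (rule ccontr)
    assume ne: "j' \<noteq> j"
    obtain k'' where k'': "k'' < Ln j'" "P j' ! k' \<in> eo j' k''" using vertex_edge assms by blast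
    then have "eo j' k'' \<in> {e \<in> E. P j ! k \<in> e}" using eo_in_E assms by auto
    then have "eo j' k'' \<in> {eo j (k - 1), eo j k}" using internal_edges[OF assms(1-3)] by simp
    moreover have "eo j (k - 1) \<in> path_edges (P j)" "eo j k \<in> path_edges (P j)"
      using eo_in_pe[of j "k-1"] eo_in_pe[of j k] assms by auto
    ultimately have "eo j' k'' \<in> path_edges (P j)" by (metis insertE singletonD)
    moreover have "eo j' k'' \<in> path_edges (P j')" using eo_in_pe k'' assms by auto
    ultimately show False using disj assms ne by blast
  qed
  then show ?thesis using nth_inj[of j k k'] assms by auto
qed

end


lemma no_int_between: "real (m::nat) < real n \<Longrightarrow> real n < real m + 1 \<Longrightarrow> False"
  by (metis of_nat_Suc of_nat_less_iff not_less_eq add.commute)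
lemma nat_step: "real (m::nat) < real n \<Longrightarrow> real m + 1 \<le> real n"
  by (metis Suc_leI of_nat_Suc of_nat_le_iff of_nat_less_iff add.commute)
lemma same_unit: "real (m::nat) < x \<Longrightarrow> x < real m + 1 \<Longrightarrow> real (n::nat) < x \<Longrightarrow> x < real n + 1 \<Longrightarrow> m = n"
  by (metis linorder_neqE_nat nat_step of_nat_less_iff add.commute less_le_not_le order.strict_trans1 le_less_trans not_less)

definition crossr :: "real \<Rightarrow> real \<Rightarrow> real \<Rightarrow> real \<Rightarrow> bool" where
  "crossr x1 y1 x2 y2 \<longleftrightarrow> (x1 < x2 \<and> x2 < y1 \<and> y1 < y2) \<or> (x2 < x1 \<and> x1 < y2 \<and> y2 < y1)"

lemma crossr_sym: "crossr x1 y1 x2 y2 \<longleftrightarrow> crossr x2 y2 x1 y1"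
  unfolding crossr_def by auto

locale G1 = G0 +
  fixes \<beta> :: "'a \<Rightarrow> nat"
  assumes binj: "inj_on \<beta> V"
    and orient: "\<forall>j<f. \<beta> (P j ! 0) < \<beta> (P j ! Ln j)"
begin

definition a :: "nat \<Rightarrow> 'a" where "a j = P j ! 0"
definition b :: "nat \<Rightarrow> 'a" where "b j = P j ! Ln j"
definition Intv :: "'a set" where "Intv = {v. \<exists>j<f. \<exists>k. 0 < k \<and> k < Ln j \<and> v = P j ! k}"
definition K :: "'a set" where "K = V - Intv"
definition same :: "nat \<Rightarrow> nat \<Rightarrow> bool" where "same i j \<longleftrightarrow> a i = a j \<and> b i = b j"
definition bent :: "nat \<Rightarrow> bool" where
  "bent j \<longleftrightarrow> (\<exists>i<f. i \<noteq> j \<and> same i j \<and> (Ln i = 1 \<or> (Ln j \<noteq> 1 \<and> i < j)))"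
definition \<kappa> :: "nat \<Rightarrow> real" where
  "\<kappa> j = real (\<beta> (a j)) + 1 / (2 + (real (\<beta> (b j)) + real j / real (Suc f)))"
definition Aset :: "nat \<Rightarrow> nat set" where
  "Aset j = {i. i < f \<and> bent i \<and> a i = a j \<and> \<kappa> i < \<kappa> j}"
definition n1 :: "nat \<Rightarrow> nat" where "n1 j = max 1 (card (Aset j))"
definition w :: "nat \<Rightarrow> 'a" where "w j = P j ! n1 j"
definition C :: "'a set" where "C = K \<union> w ` {j. j < f \<and> bent j}"
definition keyv :: "'a \<Rightarrow> real" where
  "keyv v = (if v \<in> K then real (\<beta> v) else \<kappa> (THE j. j < f \<and> bent j \<and> w j = v))"
definition strokes :: "nat \<Rightarrow> ('a \<times> 'a) set" where
  "strokes j = (if bent j then {(a j, w j), (w j, b j)} else {(a j, b j)})"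
definition H :: "('a \<times> 'a) set" where "H = (\<Union>j\<in>{..<f}. strokes j)"
definition crossk :: "'a \<times> 'a \<Rightarrow> 'a \<times> 'a \<Rightarrow> bool" where
  "crossk s s' \<longleftrightarrow> crossr (keyv (fst s)) (keyv (snd s)) (keyv (fst s')) (keyv (snd s'))"

lemma a_V: "j < f \<Longrightarrow> a j \<in> V" unfolding a_def using inV by auto
lemma b_V: "j < f \<Longrightarrow> b j \<in> V" unfolding b_def using inV by auto
lemma ab_beta: "j < f \<Longrightarrow> \<beta> (a j) < \<beta> (b j)" using orient unfolding a_def b_def by auto
lemma ab_ne: "j < f \<Longrightarrow> a j \<noteq> b j" using ab_beta by fastforce

lemma a_notInt: "j < f \<Longrightarrow> a j \<notin> Intv"
proof
  assume "j < f" "a j \<in> Intv"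
  then obtain j' k where "j' < f" "0 < k" "k < Ln j'" "a j = P j' ! k" unfolding Intv_def by auto
  then show False using internal_unique[of j' k j 0] \<open>j < f\<close> unfolding a_def by auto
qed

lemma b_notInt: "j < f \<Longrightarrow> b j \<notin> Intv"
proof
  assume "j < f" "b j \<in> Intv"
  then obtain j' k where "j' < f" "0 < k" "k < Ln j'" "b j = P j' ! k" unfolding Intv_def by auto
  then show False using internal_unique[of j' k j "Ln j"] \<open>j < f\<close> Ln_ge1[of j] unfolding b_def by auto
qed

lemma a_K: "j < f \<Longrightarrow> a j \<in> K" unfolding K_def using a_V a_notInt by auto
lemma b_K: "j < f \<Longrightarrow> b j \<in> K" unfolding K_def using b_V b_notInt by auto

lemma bent_len: assumes "j < f" "bent j" shows "Ln j \<ge> 2"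
proof (rule ccontr)
  assume "\<not> Ln j \<ge> 2"
  then have L1: "Ln j = 1" using Ln_ge1[OF assms(1)] by auto
  obtain i where i: "i < f" "i \<noteq> j" "same i j" "Ln i = 1 \<or> (Ln j \<noteq> 1 \<and> i < j)"
    using assms unfolding bent_def by auto
  then have L1': "Ln i = 1" using L1 by auto
  have "eo i 0 = eo j 0" using i(3) L1 L1' unfolding eo_def same_def a_def b_def by auto
  then show False using eo_inj[of i j 0 0] i L1 L1' assms by auto
qed

lemma straight_unique: "i < f \<Longrightarrow> i' < f \<Longrightarrow> \<not> bent i \<Longrightarrow> \<not> bent i' \<Longrightarrow> same i i' \<Longrightarrow> i = i'"
proof (rule ccontr)
  assume a: "i < f" "i' < f" "\<not> bent i" "\<not> bent i'" "same i i'" "i \<noteq> i'"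
  have s': "same i' i" using a(5) unfolding same_def by auto
  from a(3) have "\<not> (Ln i' = 1 \<or> (Ln i \<noteq> 1 \<and> i' < i))" using a s' unfolding bent_def by auto
  moreover from a(4) have "\<not> (Ln i = 1 \<or> (Ln i' \<noteq> 1 \<and> i < i'))" using a unfolding bent_def by auto
  ultimately show False using a(6) by auto
qed

lemma exists_straight:
  assumes "j < f" "bent j"
  shows "\<exists>F<f. F \<noteq> j \<and> same F j \<and> \<not> bent F"
proof -
  define G where "G = {i. i < f \<and> same i j}"
  define r where "r i = (if Ln i = 1 then 0 else f) + i" for i
  have "j \<in> G" using assms unfolding G_def same_def by auto
  then obtain F where F0: "F \<in> G" "\<forall>i. i \<in> G \<longrightarrow> r F \<le> r i"
    using ex_has_least_nat[of "\<lambda>i. i \<in> G" j r] by blast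
  then have F: "F \<in> G" "\<forall>i\<in>G. r F \<le> r i" by auto
  have nb: "\<not> bent F"
  proof
    assume "bent F"
    then obtain i where i: "i < f" "i \<noteq> F" "same i F" "Ln i = 1 \<or> (Ln F \<noteq> 1 \<and> i < F)"
      unfolding bent_def by auto
    have iG: "i \<in> G" using i F(1) unfolding G_def same_def by auto
    have FG: "F < f" "same F j" using F(1) unfolding G_def by auto
    show False
    proof (cases "Ln i = 1")
      case True
      show False
      proof (cases "Ln F = 1")
        case True
        have "eo i 0 = eo F 0" using i(3) True \<open>Ln i = 1\<close> unfolding eo_def same_def a_def b_def by auto
        then show False using eo_inj[of i F 0 0] i FG True \<open>Ln i = 1\<close> by auto
      next
        case False
        then have "r F = f + F" "r i = i" using True unfolding r_def by auto
        then show False using F(2) iG i(1) by force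
      qed
    next
      case False
      then have "Ln F \<noteq> 1" "i < F" using i(4) by auto
      then have "r F = f + F" "r i \<le> f + i" unfolding r_def by auto
      then show False using F(2) iG \<open>i < F\<close> by force
    qed
  qed
  then have "F \<noteq> j" using assms by auto
  then show ?thesis using F nb unfolding G_def by auto
qed

lemma Aset_sub: "j < f \<Longrightarrow> bent j \<Longrightarrow> F < f \<Longrightarrow> \<not> bent F \<Longrightarrow> Aset j \<subseteq> {..<f} - {j, F}"
  unfolding Aset_def by auto

lemma Aset_fin: "finite (Aset j)" unfolding Aset_def by auto

lemma Aset_card: assumes "j < f" "bent j" shows "card (Aset j) \<le> f - 2"
proof -
  obtain F where F: "F < f" "F \<noteq> j" "\<not> bent F" using exists_straight assms by blast
  have "card (Aset j) \<le> card ({..<f} - {j, F})" using Aset_sub[OF assms F(1) F(3)] by (intro card_mono) auto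
  also have "\<dots> = f - 2" using F assms by (simp add: card_Diff_subset)
  finally show ?thesis .
qed

lemma n1_bounds: assumes "j < f" "bent j" shows "1 \<le> n1 j" "n1 j < Ln j"
proof -
  show "1 \<le> n1 j" unfolding n1_def by auto
  have "Ln j \<ge> 2" using bent_len assms by auto
  moreover have "Ln j \<ge> f - 1" using Ln_ge assms by auto
  moreover have "card (Aset j) \<le> f - 2" using Aset_card assms by auto
  ultimately show "n1 j < Ln j" unfolding n1_def by auto
qed

lemma w_Int: assumes "j < f" "bent j" shows "w j \<in> Intv"
proof -
  have "0 < n1 j" "n1 j < Ln j" using n1_bounds[OF assms] by auto
  then show ?thesis unfolding w_def Intv_def using assms(1) by blast
qed

lemma w_V: assumes "j < f" "bent j" shows "w j \<in> V"
proof -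
  have "n1 j \<le> Ln j" using n1_bounds[OF assms] by auto
  then show ?thesis unfolding w_def using inV assms(1) by blast
qed

lemma w_notK: "j < f \<Longrightarrow> bent j \<Longrightarrow> w j \<notin> K" using w_Int unfolding K_def by auto

lemma w_inj: assumes "j < f" "bent j" "j' < f" "bent j'" "w j = w j'" shows "j = j'"
proof -
  have "0 < n1 j" "n1 j < Ln j" "n1 j' \<le> Ln j'" using n1_bounds[OF assms(1,2)] n1_bounds[OF assms(3,4)] by auto
  then show ?thesis using internal_unique[of j "n1 j" j' "n1 j'"] assms unfolding w_def by blast
qed

lemma w_ne_a: "j < f \<Longrightarrow> bent j \<Longrightarrow> i < f \<Longrightarrow> w j \<noteq> a i"
  using w_notK[of j] a_K[of i] by force
lemma w_ne_b: "j < f \<Longrightarrow> bent j \<Longrightarrow> i < f \<Longrightarrow> w j \<noteq> b i"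
  using w_notK[of j] b_K[of i] by force

lemma keyv_K: "v \<in> K \<Longrightarrow> keyv v = real (\<beta> v)" unfolding keyv_def by auto

lemma keyv_w: assumes "j < f" "bent j" shows "keyv (w j) = \<kappa> j"
proof -
  have "(THE i. i < f \<and> bent i \<and> w i = w j) = j"
    using w_inj assms by (intro the_equality) auto
  then show ?thesis unfolding keyv_def using w_notK assms by auto
qed

lemma keyv_a: "j < f \<Longrightarrow> keyv (a j) = real (\<beta> (a j))" using keyv_K a_K by auto
lemma keyv_b: "j < f \<Longrightarrow> keyv (b j) = real (\<beta> (b j))" using keyv_K b_K by auto

lemma s_nonneg: "0 \<le> real (\<beta> (b j)) + real j / real (Suc f)" by simp

lemma kappa_bounds: "real (\<beta> (a j)) < \<kappa> j" "\<kappa> j < real (\<beta> (a j)) + 1"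
proof -
  have pos: "2 + (real (\<beta> (b j)) + real j / real (Suc f)) \<ge> 2" using s_nonneg[of j] by linarith
  then have "1 / (2 + (real (\<beta> (b j)) + real j / real (Suc f))) > 0"
    by (intro divide_pos_pos) linarith+
  then show "real (\<beta> (a j)) < \<kappa> j" unfolding \<kappa>_def by simp
  have "1 / (2 + (real (\<beta> (b j)) + real j / real (Suc f))) \<le> 1/2"
    using pos by (simp add: divide_simps)
  then show "\<kappa> j < real (\<beta> (a j)) + 1" unfolding \<kappa>_def by simp
qed

lemma frac_lt1: "j < f \<Longrightarrow> real j / real (Suc f) < 1" by (simp add: divide_simps)

lemma s_bounds: "real (\<beta> (b j)) \<le> real (\<beta> (b j)) + real j / real (Suc f)"
  "j < f \<Longrightarrow> real (\<beta> (b j)) + real j / real (Suc f) < real (\<beta> (b j)) + 1"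
  using frac_lt1[of j] by auto

lemma kappa_cmp:
  assumes "i < f" "j < f" "a i = a j" "\<kappa> i < \<kappa> j"
  shows "\<beta> (b j) \<le> \<beta> (b i)"
proof (rule ccontr)
  assume "\<not> \<beta> (b j) \<le> \<beta> (b i)"
  then have "real (\<beta> (b i)) + 1 \<le> real (\<beta> (b j))" by linarith
  then have lt: "real (\<beta> (b i)) + real i / real (Suc f) < real (\<beta> (b j)) + real j / real (Suc f)"
    using s_bounds(1)[of i] s_bounds(1)[of j] s_bounds(2)[OF assms(1)] s_bounds(2)[OF assms(2)] by linarith
  have p1: "0 < 2 + (real (\<beta> (b i)) + real i / real (Suc f))" using s_nonneg[of i] by linarith
  have p2: "0 < 2 + (real (\<beta> (b j)) + real j / real (Suc f))" using s_nonneg[of j] by linarith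
  have lt2: "2 + (real (\<beta> (b i)) + real i / real (Suc f)) < 2 + (real (\<beta> (b j)) + real j / real (Suc f))"
    using lt by linarith
  have "1 / (2 + (real (\<beta> (b j)) + real j / real (Suc f))) < 1 / (2 + (real (\<beta> (b i)) + real i / real (Suc f)))"
    by (rule divide_strict_left_mono[OF lt2 zero_less_one mult_pos_pos[OF p2 p1]])
  then have "\<kappa> j < \<kappa> i" unfolding \<kappa>_def using assms(3) by simp
  then show False using assms(4) by simp
qed

lemma kappa_inj:
  assumes "i < f" "j < f" "a i = a j" "\<kappa> i = \<kappa> j"
  shows "i = j"
proof -
  let ?si = "real (\<beta> (b i)) + real i / real (Suc f)" and ?sj = "real (\<beta> (b j)) + real j / real (Suc f)"
  have "1 / (2 + ?si) = 1 / (2 + ?sj)" using assms(3,4) unfolding \<kappa>_def by simp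
  moreover have "2 + ?si > 0" "2 + ?sj > 0" using s_nonneg[of i] s_nonneg[of j] by linarith+
  ultimately have "?si = ?sj" by (simp add: divide_simps)
  moreover have "\<beta> (b i) = \<beta> (b j)"
  proof (rule ccontr)
    assume "\<beta> (b i) \<noteq> \<beta> (b j)"
    then have "real (\<beta> (b i)) + 1 \<le> real (\<beta> (b j)) \<or> real (\<beta> (b j)) + 1 \<le> real (\<beta> (b i))" by linarith
    then show False using s_bounds(1)[of i] s_bounds(1)[of j] s_bounds(2)[OF assms(1)] s_bounds(2)[OF assms(2)] \<open>?si = ?sj\<close> by linarith
  qed
  ultimately have "real i / real (Suc f) = real j / real (Suc f)" by simp
  then show "i = j" by (simp add: divide_simps)
qed


lemma C_cases: "v \<in> C \<Longrightarrow> v \<in> K \<or> (\<exists>j<f. bent j \<and> v = w j)"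
  unfolding C_def by auto

lemma K_C: "v \<in> K \<Longrightarrow> v \<in> C" unfolding C_def by auto
lemma w_C: "j < f \<Longrightarrow> bent j \<Longrightarrow> w j \<in> C" unfolding C_def by auto
lemma a_C: "j < f \<Longrightarrow> a j \<in> C" using a_K K_C by auto
lemma b_C: "j < f \<Longrightarrow> b j \<in> C" using b_K K_C by auto
lemma K_V: "v \<in> K \<Longrightarrow> v \<in> V" unfolding K_def by auto
lemma C_V: "v \<in> C \<Longrightarrow> v \<in> V" using C_cases[of v] K_V w_V by blast

lemma keyv_inj: assumes "x \<in> C" "y \<in> C" "keyv x = keyv y" shows "x = y"
proof -
  have kw: "keyv v \<noteq> keyv (w i)" if "v \<in> K" "i < f" "bent i" for v i
  proof
    assume "keyv v = keyv (w i)"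
    then have e: "real (\<beta> v) = \<kappa> i" using keyv_K[OF that(1)] keyv_w[OF that(2,3)] by simp
    show False using kappa_bounds[of i] no_int_between[of "\<beta> (a i)" "\<beta> v"] e
      using nat_step[of "\<beta> (a i)" "\<beta> v"] by linarith
  qed
  show ?thesis
  proof (cases "x \<in> K")
    case xK: True
    show ?thesis
    proof (cases "y \<in> K")
      case True
      then show ?thesis using xK assms(3) keyv_K binj K_V unfolding inj_on_def by auto
    next
      case False
      then obtain j where "j < f" "bent j" "y = w j" using C_cases[OF assms(2)] by auto
      then show ?thesis using kw[OF xK] assms(3) by auto
    qed
  next
    case xnK: False
    then obtain i where i: "i < f" "bent i" "x = w i" using C_cases[OF assms(1)] by auto
    show ?thesis
    proof (cases "y \<in> K")
      case True
      then show ?thesis using kw[OF True i(1,2)] assms(3) i(3) by auto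
    next
      case False
      then obtain j where j: "j < f" "bent j" "y = w j" using C_cases[OF assms(2)] by auto
      have kk: "\<kappa> i = \<kappa> j" using assms(3) i j keyv_w by auto
      have "\<beta> (a i) = \<beta> (a j)"
        using same_unit[of "\<beta> (a i)" "\<kappa> i" "\<beta> (a j)"] kappa_bounds[of i] kappa_bounds[of j] kk by auto
      then have "a i = a j" using binj a_V i(1) j(1) unfolding inj_on_def by blast
      then have "i = j" using kappa_inj[OF i(1) j(1) _ kk] by auto
      then show ?thesis using i j by auto
    qed
  qed
qed

lemma strokes_cases: "s \<in> strokes j \<Longrightarrow>
   (\<not> bent j \<and> s = (a j, b j)) \<or> (bent j \<and> s = (a j, w j)) \<or> (bent j \<and> s = (w j, b j))"
  unfolding strokes_def by (auto split: if_splits)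

lemma w_key: "j < f \<Longrightarrow> bent j \<Longrightarrow> real (\<beta> (a j)) < keyv (w j) \<and> keyv (w j) < real (\<beta> (a j)) + 1"
  using keyv_w kappa_bounds by auto

lemma stroke_C: "j < f \<Longrightarrow> s \<in> strokes j \<Longrightarrow> fst s \<in> C \<and> snd s \<in> C"
  using strokes_cases[of s j] a_C b_C w_C by auto

lemma stroke_key: assumes "j < f" "s \<in> strokes j" shows "keyv (fst s) < keyv (snd s)"
proof -
  have ab: "real (\<beta> (a j)) < real (\<beta> (b j))" using ab_beta[OF assms(1)] by simp
  then have ab1: "real (\<beta> (a j)) + 1 \<le> real (\<beta> (b j))" using nat_step by blast
  show ?thesis using strokes_cases[OF assms(2)] keyv_a[OF assms(1)] keyv_b[OF assms(1)] w_key[OF assms(1)] ab ab1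
    by auto
qed

lemma stroke_owner: assumes "i < f" "j < f" "s \<in> strokes i" "s \<in> strokes j" shows "i = j"
proof -
  have nwa: "\<And>x y. x < f \<Longrightarrow> bent x \<Longrightarrow> y < f \<Longrightarrow> w x \<noteq> a y" using w_ne_a by blast
  have nwb: "\<And>x y. x < f \<Longrightarrow> bent x \<Longrightarrow> y < f \<Longrightarrow> w x \<noteq> b y" using w_ne_b by blast
  from strokes_cases[OF assms(3)] strokes_cases[OF assms(4)] show ?thesis
  proof (elim disjE conjE)
    assume "\<not> bent i" "s = (a i, b i)" "\<not> bent j" "s = (a j, b j)"
    then show ?thesis using straight_unique[OF assms(1,2)] unfolding same_def by auto
  next
    assume "bent i" "s = (a i, w i)" "bent j" "s = (a j, w j)"
    then show ?thesis using w_inj assms(1,2) by auto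
  next
    assume "bent i" "s = (w i, b i)" "bent j" "s = (w j, b j)"
    then show ?thesis using w_inj assms(1,2) by auto
  qed (use nwa nwb assms(1,2) in \<open>metis prod.inject\<close>)+
qed

lemma H_cases: "s \<in> H \<Longrightarrow> \<exists>j<f. s \<in> strokes j" unfolding H_def by auto
lemma H_intro: "j < f \<Longrightarrow> s \<in> strokes j \<Longrightarrow> s \<in> H" unfolding H_def by auto

lemma stroke_endpoints_ne: "s \<in> H \<Longrightarrow> fst s \<noteq> snd s"
  using H_cases stroke_key by fastforce


lemma RL1: "real p < k \<Longrightarrow> k < real p + 1 \<Longrightarrow> \<not> crossr (real m) (real n) (real p) k"
  unfolding crossr_def using no_int_between[of p n] no_int_between[of p m] by auto

lemma RL2: "p \<noteq> p' \<Longrightarrow> real p < k \<Longrightarrow> k < real p + 1 \<Longrightarrow> real p' < k' \<Longrightarrow> k' < real p' + 1 \<Longrightarrow>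
   \<not> crossr (real p) k (real p') k'"
  unfolding crossr_def using no_int_between[of p p'] no_int_between[of p' p] by auto

lemma crossr_shared: "\<not> crossr x y x y'" "\<not> crossr x y x' y" "\<not> crossr x y y x'" "\<not> crossr x y x' x"
  unfolding crossr_def by auto

lemma aV_eq: "i < f \<Longrightarrow> j < f \<Longrightarrow> \<beta> (a i) = \<beta> (a j) \<Longrightarrow> a i = a j"
  using binj a_V unfolding inj_on_def by blast

lemma CX1:
  assumes "j < f" "\<not> bent j" "i < f" "s' \<in> strokes i" "crossk (a j, b j) s'"
  shows "i \<noteq> j \<and> (bent i \<longrightarrow> s' \<noteq> (a i, w i))"
proof -
  have "s' \<noteq> (a j, b j)" using assms(5) crossr_shared unfolding crossk_def by auto
  then have "i \<noteq> j" using assms strokes_cases[of s' j] by auto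
  moreover have "bent i \<longrightarrow> s' \<noteq> (a i, w i)"
  proof (intro impI notI)
    assume bi: "bent i" and e: "s' = (a i, w i)"
    show False using assms(5) e RL1[of "\<beta> (a i)" "keyv (w i)" "\<beta> (a j)" "\<beta> (b j)"] w_key[OF assms(3) bi]
      keyv_a[OF assms(1)] keyv_b[OF assms(1)] keyv_a[OF assms(3)] unfolding crossk_def by auto
  qed
  ultimately show ?thesis by auto
qed

lemma CX2:
  assumes "j < f" "bent j" "i < f" "s' \<in> strokes i" "crossk (a j, w j) s'"
  shows "i \<in> Aset j \<and> s' = (w i, b i)"
proof -
  have kj: "real (\<beta> (a j)) < keyv (w j)" "keyv (w j) < real (\<beta> (a j)) + 1" using w_key[OF assms(1,2)] by auto
  have cr: "crossr (real (\<beta> (a j))) (keyv (w j)) (keyv (fst s')) (keyv (snd s'))"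
    using assms(5) keyv_a[OF assms(1)] unfolding crossk_def by auto
  from strokes_cases[OF assms(4)] show ?thesis
  proof (elim disjE conjE)
    assume "\<not> bent i" "s' = (a i, b i)"
    then show ?thesis using cr RL1[OF kj] crossr_sym keyv_a[OF assms(3)] keyv_b[OF assms(3)] by auto
  next
    assume bi: "bent i" and e: "s' = (a i, w i)"
    have ki: "real (\<beta> (a i)) < keyv (w i)" "keyv (w i) < real (\<beta> (a i)) + 1" using w_key[OF assms(3) bi] by auto
    show ?thesis
    proof (cases "a i = a j")
      case True then show ?thesis using cr e crossr_shared keyv_a[OF assms(3)] keyv_a[OF assms(1)] by auto
    next
      case False
      then have "\<beta> (a j) \<noteq> \<beta> (a i)" using aV_eq[OF assms(3,1)] by auto
      then show ?thesis using cr e RL2[OF _ kj ki] keyv_a[OF assms(3)] by auto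
    qed
  next
    assume bi: "bent i" and e: "s' = (w i, b i)"
    have ki: "real (\<beta> (a i)) < keyv (w i)" "keyv (w i) < real (\<beta> (a i)) + 1" using w_key[OF assms(3) bi] by auto
    have cr2: "crossr (real (\<beta> (a j))) (keyv (w j)) (keyv (w i)) (real (\<beta> (b i)))"
      using cr e keyv_b[OF assms(3)] by auto
    then consider "real (\<beta> (a j)) < keyv (w i) \<and> keyv (w i) < keyv (w j) \<and> keyv (w j) < real (\<beta> (b i))"
      | "keyv (w i) < real (\<beta> (a j)) \<and> real (\<beta> (a j)) < real (\<beta> (b i)) \<and> real (\<beta> (b i)) < keyv (w j)"
      unfolding crossr_def by auto
    then show ?thesis
    proof cases
      case 1
      then have "\<beta> (a i) = \<beta> (a j)" using same_unit[of "\<beta> (a i)" "keyv (w i)" "\<beta> (a j)"] ki kj by auto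
      then have "a i = a j" using aV_eq assms by auto
      moreover have "\<kappa> i < \<kappa> j" using 1 keyv_w assms bi by auto
      ultimately show ?thesis using e assms(3) bi unfolding Aset_def by auto
    next
      case 2
      then show ?thesis using no_int_between[of "\<beta> (a j)" "\<beta> (b i)"] kj by auto
    qed
  qed
qed

lemma CX3:
  assumes "j < f" "bent j" "i < f" "s' \<in> strokes i" "crossk (w j, b j) s'"
  shows "i \<noteq> j" "i \<notin> Aset j" "\<not> (\<not> bent i \<and> same i j)" "bent i \<Longrightarrow> s' = (w i, b i) \<or> \<not> crossk (w j, b j) (w i, b i)"
proof -
  have kj: "real (\<beta> (a j)) < keyv (w j)" "keyv (w j) < real (\<beta> (a j)) + 1" using w_key[OF assms(1,2)] by auto
  have cr: "crossr (keyv (w j)) (real (\<beta> (b j))) (keyv (fst s')) (keyv (snd s'))"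
    using assms(5) keyv_b[OF assms(1)] unfolding crossk_def by auto
  show "i \<noteq> j"
  proof
    assume "i = j"
    then have "s' = (a j, w j) \<or> s' = (w j, b j)" using strokes_cases[OF assms(4)] assms(2) by auto
    then show False using cr crossr_shared kj keyv_a[OF assms(1)] keyv_b[OF assms(1)] unfolding crossr_def by auto
  qed
  show "i \<notin> Aset j"
  proof
    assume iA: "i \<in> Aset j"
    then have bi: "bent i" and ai: "a i = a j" and kk: "\<kappa> i < \<kappa> j" unfolding Aset_def by auto
    have bb: "\<beta> (b j) \<le> \<beta> (b i)" using kappa_cmp[OF assms(3,1) ai kk] .
    have kk': "keyv (w i) < keyv (w j)" using kk keyv_w assms bi by auto
    from strokes_cases[OF assms(4)] bi have "s' = (a i, w i) \<or> s' = (w i, b i)" by auto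
    then show False
    proof
      assume "s' = (a i, w i)"
      then show False using cr kk' ai kj keyv_a[OF assms(3)] unfolding crossr_def by auto
    next
      assume "s' = (w i, b i)"
      then show False using cr kk' bb keyv_b[OF assms(3)] unfolding crossr_def by auto
    qed
  qed
  show "\<not> (\<not> bent i \<and> same i j)"
  proof
    assume "\<not> bent i \<and> same i j"
    then have "s' = (a j, b j)" using strokes_cases[OF assms(4)] unfolding same_def by auto
    then show False using cr kj keyv_a[OF assms(1)] keyv_b[OF assms(1)] unfolding crossr_def by auto
  qed
  show "s' = (w i, b i) \<or> \<not> crossk (w j, b j) (w i, b i)" if bi: "bent i"
  proof (cases "s' = (w i, b i)")
    case True then show ?thesis by auto
  next
    case False
    then have e: "s' = (a i, w i)" using strokes_cases[OF assms(4)] bi by auto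
    have ki: "real (\<beta> (a i)) < keyv (w i)" "keyv (w i) < real (\<beta> (a i)) + 1" using w_key[OF assms(3) bi] by auto
    have cr2: "crossr (keyv (w j)) (real (\<beta> (b j))) (real (\<beta> (a i))) (keyv (w i))"
      using cr e keyv_a[OF assms(3)] by auto
    then consider "keyv (w j) < real (\<beta> (a i)) \<and> real (\<beta> (a i)) < real (\<beta> (b j)) \<and> real (\<beta> (b j)) < keyv (w i)"
      | "real (\<beta> (a i)) < keyv (w j) \<and> keyv (w j) < keyv (w i) \<and> keyv (w i) < real (\<beta> (b j))"
      unfolding crossr_def by auto
    then show ?thesis
    proof cases
      case 1 then show ?thesis using no_int_between[of "\<beta> (a i)" "\<beta> (b j)"] ki by auto
    next
      case 2
      then have "\<beta> (a i) = \<beta> (a j)" using same_unit[of "\<beta> (a i)" "keyv (w j)" "\<beta> (a j)"] ki kj by auto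
      then have ai: "a i = a j" using aV_eq assms by auto
      have "\<kappa> j < \<kappa> i" using 2 keyv_w assms bi by auto
      then have bb: "\<beta> (b i) \<le> \<beta> (b j)" using kappa_cmp[OF assms(1,3) ai[symmetric]] by auto
      have "\<not> crossr (keyv (w j)) (real (\<beta> (b j))) (keyv (w i)) (real (\<beta> (b i)))"
        using 2 bb unfolding crossr_def by auto
      then show ?thesis using keyv_b[OF assms(1)] keyv_b[OF assms(3)] unfolding crossk_def by auto
    qed
  qed
qed


definition own :: "'a \<times> 'a \<Rightarrow> nat" where "own s = (THE i. i < f \<and> s \<in> strokes i)"
definition CR :: "'a \<times> 'a \<Rightarrow> ('a \<times> 'a) set" where "CR s = {s' \<in> H. crossk s s'}"

lemma own_eq: assumes "i < f" "s \<in> strokes i" shows "own s = i"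
  unfolding own_def
proof (rule the_equality)
  show "i < f \<and> s \<in> strokes i" using assms by auto
  fix i' assume "i' < f \<and> s \<in> strokes i'"
  then show "i' = i" using stroke_owner[of i' i s] assms by auto
qed

lemma own_H: assumes "s \<in> H" shows "own s < f \<and> s \<in> strokes (own s)"
proof -
  obtain j where "j < f" "s \<in> strokes j" using H_cases[OF assms] by auto
  then show ?thesis using own_eq[of j s] by auto
qed

lemma finite_strokes: "finite (strokes j)" unfolding strokes_def by auto
lemma finite_H: "finite H" unfolding H_def using finite_strokes by auto

lemma B1: assumes "j < f" "\<not> bent j" shows "card (CR (a j, b j)) \<le> f - 1"
proof -
  have inj: "inj_on own (CR (a j, b j))"
  proof (rule inj_onI)
    fix s1 s2 assume s1: "s1 \<in> CR (a j, b j)" and s2: "s2 \<in> CR (a j, b j)" and e: "own s1 = own s2"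
    let ?i = "own s1"
    have h1: "?i < f" "s1 \<in> strokes ?i" using own_H s1 unfolding CR_def by auto
    have "own s2 < f \<and> s2 \<in> strokes (own s2)" using own_H s2 unfolding CR_def by auto
    then have h2: "s2 \<in> strokes ?i" using e by simp
    have c1: "crossk (a j, b j) s1" "crossk (a j, b j) s2" using s1 s2 unfolding CR_def by auto
    show "s1 = s2"
    proof (cases "bent ?i")
      case True
      then have "s1 \<noteq> (a ?i, w ?i)" "s2 \<noteq> (a ?i, w ?i)"
        using CX1[OF assms h1(1) h1(2) c1(1)] CX1[OF assms h1(1) h2 c1(2)] by auto
      then show ?thesis using strokes_cases[OF h1(2)] strokes_cases[OF h2] True by auto
    next
      case False
      then show ?thesis using strokes_cases[OF h1(2)] strokes_cases[OF h2] by auto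
    qed
  qed
  have "own ` CR (a j, b j) \<subseteq> {..<f} - {j}"
  proof
    fix i assume "i \<in> own ` CR (a j, b j)"
    then obtain s where s: "s \<in> CR (a j, b j)" "i = own s" by auto
    then have i: "i < f" "s \<in> strokes i" using own_H unfolding CR_def by auto
    have c: "crossk (a j, b j) s" using s unfolding CR_def by auto
    have "i \<noteq> j" using CX1[OF assms(1) assms(2) i(1) i(2) c] by auto
    then show "i \<in> {..<f} - {j}" using i by auto
  qed
  then have "card (own ` CR (a j, b j)) \<le> card ({..<f} - {j})" by (intro card_mono) auto
  also have "\<dots> = f - 1" using assms(1) by simp
  finally show ?thesis using card_image[OF inj] by simp
qed

lemma B2: assumes "j < f" "bent j" shows "card (CR (a j, w j)) \<le> card (Aset j)"
proof -
  have "CR (a j, w j) \<subseteq> (\<lambda>i. (w i, b i)) ` Aset j"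
  proof
    fix s assume s: "s \<in> CR (a j, w j)"
    then have "own s < f" "s \<in> strokes (own s)" using own_H unfolding CR_def by auto
    then show "s \<in> (\<lambda>i. (w i, b i)) ` Aset j" using CX2[OF assms] s unfolding CR_def by blast
  qed
  then have "card (CR (a j, w j)) \<le> card ((\<lambda>i. (w i, b i)) ` Aset j)"
    using Aset_fin by (intro card_mono) auto
  also have "\<dots> \<le> card (Aset j)" by (rule card_image_le[OF Aset_fin])
  finally show ?thesis .
qed

lemma B3: assumes "j < f" "bent j" shows "card (CR (w j, b j)) + card (Aset j) \<le> f - 2"
proof -
  obtain F where F: "F < f" "F \<noteq> j" "same F j" "\<not> bent F" using exists_straight assms by blast
  have inj: "inj_on own (CR (w j, b j))"
  proof (rule inj_onI)
    fix s1 s2 assume s1: "s1 \<in> CR (w j, b j)" and s2: "s2 \<in> CR (w j, b j)" and e: "own s1 = own s2"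
    let ?i = "own s1"
    have h1: "?i < f" "s1 \<in> strokes ?i" using own_H s1 unfolding CR_def by auto
    have "own s2 < f \<and> s2 \<in> strokes (own s2)" using own_H s2 unfolding CR_def by auto
    then have h2: "s2 \<in> strokes ?i" using e by simp
    have c1: "crossk (w j, b j) s1" "crossk (w j, b j) s2" using s1 s2 unfolding CR_def by auto
    show "s1 = s2"
    proof (cases "bent ?i")
      case True
      have "s1 = (w ?i, b ?i) \<or> \<not> crossk (w j, b j) (w ?i, b ?i)" using CX3(4)[OF assms h1 c1(1) True] .
      moreover have "s2 = (w ?i, b ?i) \<or> \<not> crossk (w j, b j) (w ?i, b ?i)" using CX3(4)[OF assms h1(1) h2 c1(2) True] .
      ultimately show ?thesis using strokes_cases[OF h1(2)] strokes_cases[OF h2] True c1 by auto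
    next
      case False
      then show ?thesis using strokes_cases[OF h1(2)] strokes_cases[OF h2] by auto
    qed
  qed
  have sub: "own ` CR (w j, b j) \<subseteq> {..<f} - (Aset j \<union> {j, F})"
  proof
    fix i assume "i \<in> own ` CR (w j, b j)"
    then obtain s where s: "s \<in> CR (w j, b j)" "i = own s" by auto
    then have i: "i < f" "s \<in> strokes i" using own_H unfolding CR_def by auto
    have c: "crossk (w j, b j) s" using s unfolding CR_def by auto
    have "i \<noteq> F"
    proof
      assume "i = F"
      then show False using CX3(3)[OF assms i c] F by auto
    qed
    then show "i \<in> {..<f} - (Aset j \<union> {j, F})" using CX3(1,2)[OF assms i c] i by auto
  qed
  have AjF: "Aset j \<union> {j, F} \<subseteq> {..<f}" using Aset_def F assms by auto
  have dis: "j \<notin> Aset j" "F \<notin> Aset j" using F unfolding Aset_def by auto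
  have cu: "card (Aset j \<union> {j, F}) = card (Aset j) + 2" using dis F(2) Aset_fin by (simp add: card_insert_if)
  have "card (own ` CR (w j, b j)) \<le> card ({..<f} - (Aset j \<union> {j, F}))" using sub by (intro card_mono) auto
  also have "\<dots> = f - (card (Aset j) + 2)" using AjF cu by (simp add: card_Diff_subset Aset_fin)
  finally have "card (CR (w j, b j)) \<le> f - (card (Aset j) + 2)" using card_image[OF inj] by simp
  moreover have "card (Aset j) + 2 \<le> f" using card_mono[OF _ AjF] cu by simp
  ultimately show ?thesis by linarith
qed

end


definition lnf :: "('a \<Rightarrow> real) \<Rightarrow> 'a \<times> 'a \<Rightarrow> real \<Rightarrow> real" where
  "lnf \<tau> s x = (\<tau> (fst s) + \<tau> (snd s)) * x - \<tau> (fst s) * \<tau> (snd s)"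

lemma vieta: fixes p q p' q' :: real
  assumes "p + q = p' + q'" "p * q = p' * q'"
  shows "(p = p' \<and> q = q') \<or> (p = q' \<and> q = p')"
proof -
  have "(p - p') * (p - q') = 0"
  proof -
    have "(p - p') * (p - q') = p*p - p*(p'+q') + p'*q'" by (simp add: algebra_simps)
    also have "\<dots> = p*p - p*(p+q) + p*q" using assms by simp
    finally show ?thesis by (simp add: algebra_simps)
  qed
  then have "p = p' \<or> p = q'" by auto
  then show ?thesis using assms by auto
qed

lemma lnf_at_end: "lnf \<tau> s (\<tau> (fst s)) = (\<tau> (fst s))^2" "lnf \<tau> s (\<tau> (snd s)) = (\<tau> (snd s))^2"
  unfolding lnf_def by (simp_all add: algebra_simps power2_eq_square)

context G1
begin

definition HS :: "'a set \<Rightarrow> ('a \<times> 'a) set" where "HS S = {s \<in> H. fst s \<in> S \<and> snd s \<in> S}"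

definition NCp :: "('a \<Rightarrow> real) \<Rightarrow> 'a set \<Rightarrow> bool" where
  "NCp \<tau> S \<longleftrightarrow> (\<forall>s1\<in>HS S. \<forall>s2\<in>HS S. \<forall>s3\<in>HS S. s1 \<noteq> s2 \<longrightarrow> s1 \<noteq> s3 \<longrightarrow> s2 \<noteq> s3 \<longrightarrow>
      (\<forall>x. lnf \<tau> s1 x = lnf \<tau> s2 x \<longrightarrow> lnf \<tau> s2 x = lnf \<tau> s3 x \<longrightarrow> lnf \<tau> s1 x = x^2))"

definition monoS :: "('a \<Rightarrow> real) \<Rightarrow> 'a set \<Rightarrow> bool" where
  "monoS \<tau> S \<longleftrightarrow> (\<forall>x\<in>S. \<forall>y\<in>S. keyv x < keyv y \<longrightarrow> \<tau> x < \<tau> y)"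

lemma H_C: "s \<in> H \<Longrightarrow> fst s \<in> C \<and> snd s \<in> C" using H_cases stroke_C by blast

lemma H_key: "s \<in> H \<Longrightarrow> keyv (fst s) < keyv (snd s)" using H_cases stroke_key by blast

lemma monoS_inj: "monoS \<tau> S \<Longrightarrow> S \<subseteq> C \<Longrightarrow> x \<in> S \<Longrightarrow> y \<in> S \<Longrightarrow> \<tau> x = \<tau> y \<Longrightarrow> x = y"
  unfolding monoS_def using keyv_inj by (metis in_mono less_irrefl linorder_neqE_linordered_idom)

lemma H_set_eq: assumes "s \<in> H" "s' \<in> H" "fst s = fst s' \<and> snd s = snd s' \<or> fst s = snd s' \<and> snd s = fst s'"
  shows "s = s'"
  using assms H_key[OF assms(1)] H_key[OF assms(2)] by (cases s, cases s') auto

lemma lines_distinct: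
  assumes "monoS \<tau> S" "S \<subseteq> C" "s1 \<in> HS S" "s2 \<in> HS S" "s1 \<noteq> s2"
    "\<tau> (fst s1) + \<tau> (snd s1) = \<tau> (fst s2) + \<tau> (snd s2)"
  shows "\<tau> (fst s1) * \<tau> (snd s1) \<noteq> \<tau> (fst s2) * \<tau> (snd s2)"
proof
  assume "\<tau> (fst s1) * \<tau> (snd s1) = \<tau> (fst s2) * \<tau> (snd s2)"
  then have v: "(\<tau> (fst s1) = \<tau> (fst s2) \<and> \<tau> (snd s1) = \<tau> (snd s2)) \<or> (\<tau> (fst s1) = \<tau> (snd s2) \<and> \<tau> (snd s1) = \<tau> (fst s2))"
    using vieta assms(6) by blast
  have in1: "fst s1 \<in> S" "snd s1 \<in> S" "fst s2 \<in> S" "snd s2 \<in> S" "s1 \<in> H" "s2 \<in> H"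
    using assms(3,4) unfolding HS_def by auto
  have "fst s1 = fst s2 \<and> snd s1 = snd s2 \<or> fst s1 = snd s2 \<and> snd s1 = fst s2"
    using v monoS_inj[OF assms(1,2)] in1 by blast
  then show False using H_set_eq[OF in1(5,6)] assms(5) by blast
qed

lemma two_lines_x:
  assumes "monoS \<tau> S" "S \<subseteq> C" "s1 \<in> HS S" "s2 \<in> HS S" "s1 \<noteq> s2" "lnf \<tau> s1 x = lnf \<tau> s2 x"
  shows "\<tau> (fst s1) + \<tau> (snd s1) \<noteq> \<tau> (fst s2) + \<tau> (snd s2) \<and>
     x = (\<tau> (fst s1) * \<tau> (snd s1) - \<tau> (fst s2) * \<tau> (snd s2)) / ((\<tau> (fst s1) + \<tau> (snd s1)) - (\<tau> (fst s2) + \<tau> (snd s2)))"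
proof -
  let ?m1 = "\<tau> (fst s1) + \<tau> (snd s1)" and ?m2 = "\<tau> (fst s2) + \<tau> (snd s2)"
  let ?p1 = "\<tau> (fst s1) * \<tau> (snd s1)" and ?p2 = "\<tau> (fst s2) * \<tau> (snd s2)"
  have e: "?m1 * x - ?p1 = ?m2 * x - ?p2" using assms(6) unfolding lnf_def by simp
  have ne: "?m1 \<noteq> ?m2"
  proof
    assume "?m1 = ?m2"
    then show False using lines_distinct[OF assms(1-5)] e by simp
  qed
  moreover have "(?m1 - ?m2) * x = ?p1 - ?p2" using e by (simp add: algebra_simps)
  ultimately show ?thesis by (simp add: field_simps)
qed

definition bv :: "('a \<Rightarrow> real) \<Rightarrow> real \<Rightarrow> 'a \<times> 'a \<Rightarrow> 'a \<times> 'a \<Rightarrow> real" where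
  "bv \<tau> q s1 s2 = (let xs = (\<tau> (fst s1) * \<tau> (snd s1) - \<tau> (fst s2) * \<tau> (snd s2)) / ((\<tau> (fst s1) + \<tau> (snd s1)) - (\<tau> (fst s2) + \<tau> (snd s2)));
      ys = lnf \<tau> s1 xs in (ys - q * xs) / (xs - q))"


definition oth :: "'a \<times> 'a \<Rightarrow> 'a \<Rightarrow> 'a" where "oth s v = (if fst s = v then snd s else fst s)"

lemma lnf_oth: "v = fst s \<or> v = snd s \<Longrightarrow> lnf \<tau> s x = (\<tau> v + \<tau> (oth s v)) * x - \<tau> v * \<tau> (oth s v)"
  unfolding lnf_def oth_def by (auto simp: algebra_simps)

lemma two_new:
  assumes "monoS \<tau> S" "S \<subseteq> C" "s \<in> HS S" "s' \<in> HS S" "s \<noteq> s'"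
    "v = fst s \<or> v = snd s" "v = fst s' \<or> v = snd s'" "lnf \<tau> s x = lnf \<tau> s' x"
  shows "x = \<tau> v"
proof -
  have in1: "fst s \<in> S" "snd s \<in> S" "fst s' \<in> S" "snd s' \<in> S" "s \<in> H" "s' \<in> H"
    using assms(3,4) unfolding HS_def by auto
  have ne: "oth s v \<noteq> oth s' v"
  proof
    assume "oth s v = oth s' v"
    then have "fst s = fst s' \<and> snd s = snd s' \<or> fst s = snd s' \<and> snd s = fst s'"
      using assms(6,7) unfolding oth_def by (auto split: if_splits)
    then show False using H_set_eq[OF in1(5,6)] assms(5) by blast
  qed
  have o1: "oth s v \<in> S" "oth s' v \<in> S" using in1 unfolding oth_def by auto
  then have "\<tau> (oth s v) \<noteq> \<tau> (oth s' v)" using monoS_inj[OF assms(1,2)] ne by blast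
  moreover have "(\<tau> (oth s v) - \<tau> (oth s' v)) * (x - \<tau> v) = 0"
    using assms(8) lnf_oth[OF assms(6), of \<tau> x] lnf_oth[OF assms(7), of \<tau> x] by (simp add: algebra_simps)
  ultimately show ?thesis by simp
qed

lemma lnf_upd: "x0 \<noteq> fst s \<Longrightarrow> x0 \<noteq> snd s \<Longrightarrow> lnf (\<tau>(x0 := t)) s = lnf \<tau> s"
  unfolding lnf_def by auto

lemma HS_mono: "S \<subseteq> S' \<Longrightarrow> HS S \<subseteq> HS S'" unfolding HS_def by auto

lemma monoS_upd:
  assumes "monoS \<tau> S" "x0 \<notin> S" "\<forall>y\<in>S. \<tau> y < t" "\<forall>y\<in>S. keyv y < keyv x0"
  shows "monoS (\<tau>(x0 := t)) (insert x0 S)"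
  using assms unfolding monoS_def by (auto simp: less_asym)

lemma greedy_step:
  assumes mS: "monoS \<tau> S" and SC: "insert x0 S \<subseteq> C" and x0S: "x0 \<notin> S"
    and kS: "\<forall>y\<in>S. keyv y < keyv x0" and NC: "NCp \<tau> S" and fS: "finite S"
  shows "\<exists>\<tau>'. monoS \<tau>' (insert x0 S) \<and> NCp \<tau>' (insert x0 S)"
proof -
  define Bad where "Bad = (\<lambda>(q, s1, s2). bv \<tau> (\<tau> q) s1 s2) ` (S \<times> HS S \<times> HS S)"
  have fHS: "finite (HS S)" unfolding HS_def using finite_H by auto
  have fB: "finite Bad" unfolding Bad_def using fS fHS by auto
  define t where "t = Max (insert 0 (\<tau> ` S \<union> Bad)) + 1"
  have fin2: "finite (insert 0 (\<tau> ` S \<union> Bad))" using fS fB by auto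
  have tS: "\<forall>y\<in>S. \<tau> y < t"
  proof
    fix y assume "y \<in> S"
    then have "\<tau> y \<le> Max (insert 0 (\<tau> ` S \<union> Bad))" using fin2 by (intro Max_ge) auto
    then show "\<tau> y < t" unfolding t_def by simp
  qed
  have tB: "t \<notin> Bad"
  proof
    assume "t \<in> Bad"
    then have "t \<le> Max (insert 0 (\<tau> ` S \<union> Bad))" using fin2 by (intro Max_ge) auto
    then show False unfolding t_def by simp
  qed
  define \<tau>' where "\<tau>' = \<tau>(x0 := t)"
  have SC': "S \<subseteq> C" using SC by auto
  have m': "monoS \<tau>' (insert x0 S)" unfolding \<tau>'_def using monoS_upd[OF mS x0S tS kS] .
  have SC2: "insert x0 S \<subseteq> C" using SC .
  have old: "lnf \<tau>' s = lnf \<tau> s" if "s \<in> HS S" for s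
    using that x0S unfolding \<tau>'_def HS_def by (intro lnf_upd) auto
  have HS_split: "s \<in> HS S \<or> (x0 = fst s \<or> x0 = snd s)" if "s \<in> HS (insert x0 S)" for s
    using that unfolding HS_def by auto
  have one_new: "lnf \<tau>' s1 x = x^2"
    if s1: "s1 \<in> HS S" and s2: "s2 \<in> HS S" and s3: "s3 \<in> HS (insert x0 S)" and ne: "s1 \<noteq> s2"
      and x3: "x0 = fst s3 \<or> x0 = snd s3"
      and e1: "lnf \<tau>' s1 x = lnf \<tau>' s2 x" and e2: "lnf \<tau>' s2 x = lnf \<tau>' s3 x" for s1 s2 s3 x
  proof -
    let ?q = "oth s3 x0"
    have s3H: "s3 \<in> H" "fst s3 \<in> insert x0 S" "snd s3 \<in> insert x0 S" using s3 unfolding HS_def by auto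
    have qne: "?q \<noteq> x0" using stroke_endpoints_ne[OF s3H(1)] x3 unfolding oth_def by auto
    have qS: "?q \<in> S" using s3H qne x3 unfolding oth_def by (auto split: if_splits)
    have e1': "lnf \<tau> s1 x = lnf \<tau> s2 x" using e1 old s1 s2 by simp
    have xs: "x = (\<tau> (fst s1) * \<tau> (snd s1) - \<tau> (fst s2) * \<tau> (snd s2)) / ((\<tau> (fst s1) + \<tau> (snd s1)) - (\<tau> (fst s2) + \<tau> (snd s2)))"
      using two_lines_x[OF mS SC' s1 s2 ne e1'] by blast
    have l3: "lnf \<tau>' s3 x = (t + \<tau> ?q) * x - t * \<tau> ?q"
      using lnf_oth[OF x3, of \<tau>' x] qne unfolding \<tau>'_def by simp
    show ?thesis
    proof (cases "x = \<tau> ?q")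
      case True
      then have "lnf \<tau>' s3 x = x^2" using l3 by (simp add: algebra_simps power2_eq_square)
      then show ?thesis using e1 e2 by simp
    next
      case False
      have "t * (x - \<tau> ?q) = lnf \<tau> s1 x - \<tau> ?q * x" using l3 e1 e2 old[OF s1] by (simp add: algebra_simps)
      then have "t = (lnf \<tau> s1 x - \<tau> ?q * x) / (x - \<tau> ?q)" using False by (simp add: field_simps)
      then have "t = bv \<tau> (\<tau> ?q) s1 s2" unfolding bv_def Let_def using xs by simp
      moreover have "bv \<tau> (\<tau> ?q) s1 s2 \<in> Bad" unfolding Bad_def using qS s1 s2 by force
      ultimately show ?thesis using tB by simp
    qed
  qed
  have NC': "NCp \<tau>' (insert x0 S)"
    unfolding NCp_def
  proof (intro ballI impI allI)
    fix s1 s2 s3 x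
    assume s1: "s1 \<in> HS (insert x0 S)" and s2: "s2 \<in> HS (insert x0 S)" and s3: "s3 \<in> HS (insert x0 S)"
      and n12: "s1 \<noteq> s2" and n13: "s1 \<noteq> s3" and n23: "s2 \<noteq> s3"
      and e1: "lnf \<tau>' s1 x = lnf \<tau>' s2 x" and e2: "lnf \<tau>' s2 x = lnf \<tau>' s3 x"
    have two: "lnf \<tau>' s1 x = x^2" if "u \<in> {s1, s2, s3}" "u' \<in> {s1, s2, s3}" "u \<noteq> u'"
       "x0 = fst u \<or> x0 = snd u" "x0 = fst u' \<or> x0 = snd u'" for u u'
    proof -
      have uu: "u \<in> HS (insert x0 S)" "u' \<in> HS (insert x0 S)" using that(1,2) s1 s2 s3 by auto
      have "lnf \<tau>' u x = lnf \<tau>' u' x" using that(1,2) e1 e2 by auto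
      then have xv: "x = \<tau>' x0" using two_new[OF m' SC2 uu that(3,4,5)] by simp
      have "lnf \<tau>' u x = x^2" using xv that(4) lnf_at_end[of \<tau>' u] by auto
      then show ?thesis using that(1) e1 e2 by auto
    qed
    show "lnf \<tau>' s1 x = x^2"
    proof (cases "x0 = fst s1 \<or> x0 = snd s1")
      case c1: True
      show ?thesis
      proof (cases "x0 = fst s2 \<or> x0 = snd s2")
        case True then show ?thesis using two[of s1 s2] c1 n12 by auto
      next
        case c2: False
        show ?thesis
        proof (cases "x0 = fst s3 \<or> x0 = snd s3")
          case True then show ?thesis using two[of s1 s3] c1 n13 by auto
        next
          case False
          have "s2 \<in> HS S" "s3 \<in> HS S" using HS_split[OF s2] HS_split[OF s3] c2 False by auto
          then have "lnf \<tau>' s2 x = x^2" using one_new[OF _ _ s1 n23] c1 e1 e2 by auto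
          then show ?thesis using e1 by simp
        qed
      qed
    next
      case c1: False
      then have h1: "s1 \<in> HS S" using HS_split[OF s1] by auto
      show ?thesis
      proof (cases "x0 = fst s2 \<or> x0 = snd s2")
        case c2: True
        show ?thesis
        proof (cases "x0 = fst s3 \<or> x0 = snd s3")
          case True then show ?thesis using two[of s2 s3] c2 n23 by auto
        next
          case False
          then have "s3 \<in> HS S" using HS_split[OF s3] by auto
          then show ?thesis using one_new[OF h1 _ s2 n13 c2] e1 e2 by auto
        qed
      next
        case c2: False
        then have h2: "s2 \<in> HS S" using HS_split[OF s2] by auto
        show ?thesis
        proof (cases "x0 = fst s3 \<or> x0 = snd s3")
          case True show ?thesis using one_new[OF h1 h2 s3 n12 True e1 e2] by simp
        next
          case False
          then have h3: "s3 \<in> HS S" using HS_split[OF s3] by auto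
          have "lnf \<tau> s1 x = x^2" using NC h1 h2 h3 n12 n13 n23 e1 e2 old[OF h1] old[OF h2] old[OF h3]
            unfolding NCp_def by metis
          then show ?thesis using old[OF h1] by simp
        qed
      qed
    qed
  qed
  show ?thesis using m' NC' by blast
qed


lemma finite_C: "finite C" using C_V finV by (meson finite_subset subsetI)

lemma tau_exists: "\<exists>\<tau>. monoS \<tau> C \<and> NCp \<tau> C"
proof -
  have "S \<subseteq> C \<longrightarrow> (\<exists>\<tau>. monoS \<tau> S \<and> NCp \<tau> S)" if "finite S" for S
    using that
  proof (induction S rule: finite_ranking_induct[where f = keyv])
    case empty
    have "HS {} = {}" unfolding HS_def by auto
    then show ?case unfolding monoS_def NCp_def by auto
  next
    case (insert x S)
    show ?case
    proof
      assume sub: "insert x S \<subseteq> C"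
      show "\<exists>\<tau>. monoS \<tau> (insert x S) \<and> NCp \<tau> (insert x S)"
      proof (cases "x \<in> S")
        case True
        then show ?thesis using insert sub by (simp add: insert_absorb)
      next
        case False
        obtain \<tau> where t: "monoS \<tau> S" "NCp \<tau> S" using insert sub by auto
        have kS: "\<forall>y\<in>S. keyv y < keyv x"
        proof
          fix y assume y: "y \<in> S"
          then have "keyv y \<le> keyv x" using insert by auto
          moreover have "keyv y \<noteq> keyv x" using keyv_inj[of y x] y sub False by auto
          ultimately show "keyv y < keyv x" by simp
        qed
        show ?thesis using greedy_step[OF t(1) sub False kS t(2) insert(1)] .
      qed
    qed
  qed
  then show ?thesis using finite_C by auto
qed

end


lemma mono_chain: assumes "\<forall>k<n. \<xi> k < (\<xi> (Suc k) :: real)" "i < j" "j \<le> n" shows "\<xi> i < \<xi> j"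
  using assms(2,3)
proof (induction j)
  case 0 then show ?case by simp
next
  case (Suc j)
  show ?case
  proof (cases "i = j")
    case True then show ?thesis using assms(1) Suc by auto
  next
    case False
    then have "\<xi> i < \<xi> j" using Suc by auto
    also have "\<xi> j < \<xi> (Suc j)" using assms(1) Suc by auto
    finally show ?thesis .
  qed
qed

lemma mono_chain_le: assumes "\<forall>k<n. \<xi> k < (\<xi> (Suc k) :: real)" "i \<le> j" "j \<le> n" shows "\<xi> i \<le> \<xi> j"
  using mono_chain[OF assms(1)] assms(2,3) by (cases "i = j") (auto intro: less_imp_le)

definition subdiv_ok :: "(nat \<Rightarrow> real) \<Rightarrow> nat \<Rightarrow> real \<Rightarrow> real \<Rightarrow> real set \<Rightarrow> bool" where
  "subdiv_ok \<xi> n \<alpha> \<beta> Z \<longleftrightarrow> \<xi> 0 = \<alpha> \<and> \<xi> n = \<beta> \<and> (\<forall>k<n. \<xi> k < \<xi> (Suc k)) \<and> (\<forall>k. 0 < k \<and> k < n \<longrightarrow> \<xi> k \<notin> Z) \<and>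
     (\<forall>k<n. \<forall>x\<in>Z. \<forall>y\<in>Z. \<xi> k \<le> x \<and> x \<le> \<xi> (Suc k) \<and> \<xi> k \<le> y \<and> y \<le> \<xi> (Suc k) \<longrightarrow> x = y)"

lemma subdiv:
  "finite Z \<Longrightarrow> Z \<subseteq> {\<alpha><..<\<beta>} \<Longrightarrow> card Z \<le> n \<Longrightarrow> 1 \<le> n \<Longrightarrow> \<alpha> < \<beta> \<Longrightarrow> \<exists>\<xi>. subdiv_ok \<xi> n \<alpha> \<beta> Z"
proof (induction n arbitrary: \<alpha> Z)
  case 0 then show ?case by simp
next
  case (Suc m)
  show ?case
  proof (cases "m = 0")
    case True
    define \<xi> where "\<xi> k = (if k = 0 then \<alpha> else \<beta>)" for k :: nat
    have c1: "card Z \<le> 1" using Suc True by simp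
    have "\<forall>x\<in>Z. \<forall>y\<in>Z. x = y" using card_le_Suc0_iff_eq[OF Suc(2)] c1 by simp
    then have "subdiv_ok \<xi> (Suc m) \<alpha> \<beta> Z" using True Suc unfolding subdiv_ok_def \<xi>_def by auto
    then show ?thesis by blast
  next
    case m0: False
    show ?thesis
    proof (cases "Z = {}")
      case True
      define d where "d = (\<beta> - \<alpha>) / real (Suc m)"
      have d0: "d > 0" using Suc(6) unfolding d_def by simp
      define \<xi> where "\<xi> k = \<alpha> + real k * d" for k :: nat
      have "\<xi> k < \<xi> (Suc k)" for k using d0 unfolding \<xi>_def by (simp add: algebra_simps)
      moreover have "\<xi> (Suc m) = \<beta>" unfolding \<xi>_def d_def by simp
      moreover have "\<xi> 0 = \<alpha>" unfolding \<xi>_def by simp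
      ultimately have "subdiv_ok \<xi> (Suc m) \<alpha> \<beta> Z" using True unfolding subdiv_ok_def by blast
      then show ?thesis by blast
    next
      case False
      define z0 where "z0 = Min Z"
      have z0Z: "z0 \<in> Z" using Min_in[OF Suc(2) False] unfolding z0_def .
      have z0le: "\<forall>z\<in>Z. z0 \<le> z" using Min_le[OF Suc(2)] unfolding z0_def by auto
      define Z' where "Z' = Z - {z0}"
      define u where "u = (if Z' = {} then \<beta> else Min Z')"
      have fZ': "finite Z'" using Suc(2) unfolding Z'_def by auto
      have z0ab: "\<alpha> < z0" "z0 < \<beta>" using z0Z Suc(3) by auto
      have Z'u: "\<forall>z\<in>Z'. u \<le> z" using Min_le[OF fZ'] unfolding u_def by auto
      have uz0: "z0 < u"
      proof (cases "Z' = {}")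
        case True then show ?thesis using z0ab unfolding u_def by simp
      next
        case False
        then have "Min Z' \<in> Z'" using Min_in[OF fZ'] by auto
        then have "z0 < Min Z'" using z0le unfolding Z'_def by force
        then show ?thesis using False unfolding u_def by simp
      qed
      have ub: "u \<le> \<beta>"
      proof (cases "Z' = {}")
        case True then show ?thesis unfolding u_def by simp
      next
        case False
        then have "Min Z' \<in> Z'" using Min_in[OF fZ'] by auto
        then show ?thesis using False Suc(3) unfolding u_def Z'_def by force
      qed
      define \<xi>1 where "\<xi>1 = (z0 + u) / 2"
      have x1: "z0 < \<xi>1" "\<xi>1 < u" using uz0 unfolding \<xi>1_def by auto
      have Z'sub: "Z' \<subseteq> {\<xi>1<..<\<beta>}" using Z'u x1 Suc(3) unfolding Z'_def by force
      have cZ': "card Z' \<le> m" using Suc(4) z0Z Suc(2) unfolding Z'_def by (simp add: card_Diff_singleton)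
      obtain \<xi>' where IH: "subdiv_ok \<xi>' m \<xi>1 \<beta> Z'"
      proof -
        have h1: "1 \<le> m" using m0 by simp
        have h2: "\<xi>1 < \<beta>" using x1 ub by simp
        show ?thesis using Suc.IH[OF fZ' Z'sub cZ' h1 h2] that by blast
      qed
      have I: "\<xi>' 0 = \<xi>1" "\<xi>' m = \<beta>" "\<forall>k<m. \<xi>' k < \<xi>' (Suc k)" "\<forall>k. 0 < k \<and> k < m \<longrightarrow> \<xi>' k \<notin> Z'"
        "\<forall>k<m. \<forall>x\<in>Z'. \<forall>y\<in>Z'. \<xi>' k \<le> x \<and> x \<le> \<xi>' (Suc k) \<and> \<xi>' k \<le> y \<and> y \<le> \<xi>' (Suc k) \<longrightarrow> x = y"
        using IH unfolding subdiv_ok_def by auto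
      have ge1: "\<xi>1 \<le> \<xi>' k" if "k \<le> m" for k using mono_chain_le[OF I(3), of 0 k] that I(1) by auto
      define \<xi> where "\<xi> k = (if k = 0 then \<alpha> else \<xi>' (k - 1))" for k
      have a1: "\<xi> 0 = \<alpha>" "\<xi> (Suc m) = \<beta>" unfolding \<xi>_def using I by auto
      have a2: "\<forall>k<Suc m. \<xi> k < \<xi> (Suc k)"
      proof (intro allI impI)
        fix k assume k: "k < Suc m"
        show "\<xi> k < \<xi> (Suc k)"
        proof (cases "k = 0")
          case True then show ?thesis unfolding \<xi>_def using z0ab x1 I(1) by auto
        next
          case False then show ?thesis unfolding \<xi>_def using I(3) k by (cases k) auto
        qed
      qed
      have a3: "\<forall>k. 0 < k \<and> k < Suc m \<longrightarrow> \<xi> k \<notin> Z"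
      proof (intro allI impI)
        fix k assume k: "0 < k \<and> k < Suc m"
        have gx: "\<xi>1 \<le> \<xi> k" unfolding \<xi>_def using k ge1[of "k-1"] by auto
        have "\<xi> k \<noteq> z0" using gx x1 by auto
        moreover have "\<xi> k \<notin> Z'"
        proof (cases "k = 1")
          case True then show ?thesis unfolding \<xi>_def using I(1) Z'sub by auto
        next
          case False then show ?thesis unfolding \<xi>_def using I(4) k by auto
        qed
        ultimately show "\<xi> k \<notin> Z" unfolding Z'_def by auto
      qed
      have a4: "\<forall>k<Suc m. \<forall>x\<in>Z. \<forall>y\<in>Z. \<xi> k \<le> x \<and> x \<le> \<xi> (Suc k) \<and> \<xi> k \<le> y \<and> y \<le> \<xi> (Suc k) \<longrightarrow> x = y"
      proof (intro allI impI ballI)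
        fix k x y assume k: "k < Suc m" and x: "x \<in> Z" and y: "y \<in> Z"
          and r: "\<xi> k \<le> x \<and> x \<le> \<xi> (Suc k) \<and> \<xi> k \<le> y \<and> y \<le> \<xi> (Suc k)"
        show "x = y"
        proof (cases "k = 0")
          case True
          then have "x \<le> \<xi>1" "y \<le> \<xi>1" using r I(1) unfolding \<xi>_def by auto
          then have "x \<notin> Z'" "y \<notin> Z'" using Z'sub by auto
          then show ?thesis using x y unfolding Z'_def by auto
        next
          case False
          then have "\<xi>1 \<le> \<xi> k" unfolding \<xi>_def using k ge1[of "k-1"] by auto
          then have "x \<in> Z'" "y \<in> Z'" using r x y x1 unfolding Z'_def by auto
          moreover have "\<xi> k = \<xi>' (k - 1)" "\<xi> (Suc k) = \<xi>' (Suc (k - 1))" using False unfolding \<xi>_def by auto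
          moreover have "k - 1 < m" using k False by simp
          ultimately show ?thesis using I(5) r by auto
        qed
      qed
      show ?thesis using a1 a2 a3 a4 unfolding subdiv_ok_def by blast
    qed
  qed
qed


lemma geo_cross:
  fixes lo hi lo' hi' x :: real
  assumes "lo < x" "x < hi" "lo' < x" "x < hi'" "(x-lo)*(hi-x) = (x-lo')*(hi'-x)" "\<not> (lo = lo' \<and> hi = hi')"
  shows "crossr lo hi lo' hi'"
proof -
  have nest: False if "l1 \<le> l2" "h2 \<le> h1" "\<not> (l1 = l2 \<and> h1 = h2)" "l1 < x" "x < h1" "l2 < x" "x < h2"
     "(x-l1)*(h1-x) = (x-l2)*(h2-x)" for l1 h1 l2 h2 :: real
  proof -
    have p: "0 < x - l2" "0 < h2 - x" "x - l2 \<le> x - l1" "h2 - x \<le> h1 - x" using that by auto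
    have "(x-l2)*(h2-x) < (x-l1)*(h1-x)"
    proof (cases "l1 < l2")
      case True
      then have "(x-l2)*(h2-x) < (x-l1)*(h2-x)" using p by (intro mult_strict_right_mono) auto
      also have "\<dots> \<le> (x-l1)*(h1-x)" using p by (intro mult_left_mono) auto
      finally show ?thesis .
    next
      case False
      then have "h2 < h1" using that by auto
      then have "(x-l2)*(h2-x) < (x-l2)*(h1-x)" using p by (intro mult_strict_left_mono) auto
      also have "\<dots> \<le> (x-l1)*(h1-x)" using p that by (intro mult_right_mono) auto
      finally show ?thesis .
    qed
    then show False using that(8) by simp
  qed
  show ?thesis
  proof (cases "lo \<le> lo' \<and> hi' \<le> hi")
    case True then show ?thesis using nest[of lo lo' hi' hi] assms by auto
  next
    case F1: False
    show ?thesis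
    proof (cases "lo' \<le> lo \<and> hi \<le> hi'")
      case True then show ?thesis using nest[of lo' lo hi hi'] assms by auto
    next
      case False
      then show ?thesis using F1 assms unfolding crossr_def by auto
    qed
  qed
qed

locale G2 = G1 +
  fixes \<tau> :: "'a \<Rightarrow> real"
  assumes tmono: "monoS \<tau> C" and tNC: "NCp \<tau> C"
begin

abbreviation ln :: "'a \<times> 'a \<Rightarrow> real \<Rightarrow> real" where "ln \<equiv> lnf \<tau>"
definition lo :: "'a \<times> 'a \<Rightarrow> real" where "lo s = \<tau> (fst s)"
definition hi :: "'a \<times> 'a \<Rightarrow> real" where "hi s = \<tau> (snd s)"
definition gx :: "'a \<times> 'a \<Rightarrow> 'a \<times> 'a \<Rightarrow> real \<Rightarrow> bool" where
  "gx s s' x \<longleftrightarrow> lo s < x \<and> x < hi s \<and> lo s' < x \<and> x < hi s' \<and> ln s x = ln s' x"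
definition Z :: "'a \<times> 'a \<Rightarrow> real set" where "Z s = {x. \<exists>s'\<in>H. s' \<noteq> s \<and> gx s s' x}"

lemma tinj: "x \<in> C \<Longrightarrow> y \<in> C \<Longrightarrow> \<tau> x = \<tau> y \<Longrightarrow> x = y"
  using monoS_inj[OF tmono] by blast

lemma tless: assumes "x \<in> C" "y \<in> C" shows "\<tau> x < \<tau> y \<longleftrightarrow> keyv x < keyv y"
proof
  assume "\<tau> x < \<tau> y"
  show "keyv x < keyv y"
  proof (rule ccontr)
    assume "\<not> keyv x < keyv y"
    then have "keyv y < keyv x \<or> keyv y = keyv x" by auto
    then show False
    proof
      assume "keyv y < keyv x" then have "\<tau> y < \<tau> x" using tmono assms unfolding monoS_def by auto
      then show False using \<open>\<tau> x < \<tau> y\<close> by simp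
    next
      assume "keyv y = keyv x" then have "x = y" using keyv_inj assms by auto
      then show False using \<open>\<tau> x < \<tau> y\<close> by simp
    qed
  qed
next
  assume "keyv x < keyv y" then show "\<tau> x < \<tau> y" using tmono assms unfolding monoS_def by auto
qed

lemma HS_C: "HS C = H" unfolding HS_def using H_C by auto

lemma lo_hi: "s \<in> H \<Longrightarrow> lo s < hi s"
  unfolding lo_def hi_def using H_C H_key tless by blast

lemma ln_alt: "ln s x = x^2 - (x - lo s) * (x - hi s)"
  unfolding lnf_def lo_def hi_def by (simp add: algebra_simps power2_eq_square)

lemma ln_above: "lo s < x \<Longrightarrow> x < hi s \<Longrightarrow> ln s x > x^2"
proof -
  assume "lo s < x" "x < hi s"
  then have "(x - lo s) * (x - hi s) < 0" by (simp add: mult_pos_neg)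
  then show ?thesis using ln_alt[of s x] by simp
qed

lemma ln_lo: "ln s (lo s) = (lo s)^2" and ln_hi: "ln s (hi s) = (hi s)^2"
  using ln_alt by auto

lemma gx_cross: assumes "s \<in> H" "s' \<in> H" "s \<noteq> s'" "gx s s' x" shows "crossk s s'"
proof -
  have g: "lo s < x" "x < hi s" "lo s' < x" "x < hi s'" "ln s x = ln s' x" using assms(4) unfolding gx_def by auto
  have eq: "(x - lo s) * (hi s - x) = (x - lo s') * (hi s' - x)"
    using g(5) ln_alt[of s x] ln_alt[of s' x] by (simp add: algebra_simps)
  have C4: "fst s \<in> C" "snd s \<in> C" "fst s' \<in> C" "snd s' \<in> C" using H_C assms(1,2) by auto
  have "\<not> (lo s = lo s' \<and> hi s = hi s')"
  proof
    assume "lo s = lo s' \<and> hi s = hi s'"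
    then have "fst s = fst s'" "snd s = snd s'" using tinj C4 unfolding lo_def hi_def by auto
    then show False using assms(3) by (simp add: prod_eq_iff)
  qed
  then have cr: "crossr (lo s) (hi s) (lo s') (hi s')" using geo_cross[OF g(1-4) eq] by simp
  have tl: "\<And>u v. u \<in> C \<Longrightarrow> v \<in> C \<Longrightarrow> \<tau> u < \<tau> v \<longleftrightarrow> keyv u < keyv v" using tless by blast
  show ?thesis using cr unfolding crossk_def crossr_def lo_def hi_def
    using tl[of "fst s" "fst s'"] tl[of "fst s'" "snd s"] tl[of "snd s" "snd s'"]
      tl[of "fst s'" "fst s"] tl[of "fst s" "snd s'"] tl[of "snd s'" "snd s"] C4 by auto
qed

lemma gx_unique: assumes "s \<in> H" "s' \<in> H" "s \<noteq> s'" "gx s s' x" "gx s s' y" shows "x = y"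
proof (rule ccontr)
  assume ne: "x \<noteq> y"
  have e: "ln s x = ln s' x" "ln s y = ln s' y" using assms(4,5) unfolding gx_def by auto
  let ?m1 = "\<tau> (fst s) + \<tau> (snd s)" and ?m2 = "\<tau> (fst s') + \<tau> (snd s')"
  let ?p1 = "\<tau> (fst s) * \<tau> (snd s)" and ?p2 = "\<tau> (fst s') * \<tau> (snd s')"
  have "(?m1 - ?m2) * x = ?p1 - ?p2" "(?m1 - ?m2) * y = ?p1 - ?p2"
    using e unfolding lnf_def by (simp_all add: algebra_simps)
  then have "(?m1 - ?m2) * (x - y) = 0" by (simp add: algebra_simps)
  then have m: "?m1 = ?m2" using ne by simp
  then have "?p1 = ?p2" using \<open>(?m1 - ?m2) * x = ?p1 - ?p2\<close> by simp
  moreover have "?p1 \<noteq> ?p2" using lines_distinct[OF tmono subset_refl _ _ assms(3) m] assms(1,2) HS_C by auto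
  ultimately show False by simp
qed

lemma gx_NC: assumes "s \<in> H" "s' \<in> H" "s'' \<in> H" "s \<noteq> s'" "s \<noteq> s''" "s' \<noteq> s''" "gx s s' x" "gx s s'' x"
  shows False
proof -
  have e: "ln s x = ln s' x" "ln s x = ln s'' x" "lo s < x" "x < hi s" using assms(7,8) unfolding gx_def by auto
  have "ln s x = x^2" using tNC assms(1-6) e(1,2) HS_C unfolding NCp_def by metis
  then show False using ln_above[OF e(3,4)] by simp
qed

lemma gx_sym: "gx s s' x \<longleftrightarrow> gx s' s x" unfolding gx_def by auto

lemma Z_sub: "s \<in> H \<Longrightarrow> Z s \<subseteq> (\<lambda>s'. SOME x. gx s s' x) ` CR s"
proof
  fix x assume s: "s \<in> H" and "x \<in> Z s"
  then obtain s' where s': "s' \<in> H" "s' \<noteq> s" "gx s s' x" unfolding Z_def by auto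
  have "(SOME x. gx s s' x) = x" using gx_unique[OF s s'(1) _ s'(3)] s'(2) someI[of "gx s s'" x] s'(3) by metis
  moreover have "s' \<in> CR s" using gx_cross[OF s s'(1) _ s'(3)] s' unfolding CR_def by auto
  ultimately show "x \<in> (\<lambda>s'. SOME x. gx s s' x) ` CR s" by force
qed

lemma finite_CR: "finite (CR s)" unfolding CR_def using finite_H by auto

lemma Z_fin: "s \<in> H \<Longrightarrow> finite (Z s)"
  using Z_sub finite_CR by (meson finite_imageI finite_subset)

lemma Z_card: "s \<in> H \<Longrightarrow> card (Z s) \<le> card (CR s)"
  using Z_sub finite_CR by (meson card_image_le card_mono finite_imageI order_trans)

lemma Z_in: "x \<in> Z s \<Longrightarrow> lo s < x \<and> x < hi s" unfolding Z_def gx_def by auto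


definition stk :: "nat \<Rightarrow> nat \<Rightarrow> 'a \<times> 'a" where
  "stk j k = (if bent j then (if k < n1 j then (a j, w j) else (w j, b j)) else (a j, b j))"

lemma stk_H: "j < f \<Longrightarrow> stk j k \<in> H"
  unfolding stk_def using H_intro[of j] unfolding strokes_def by auto

definition Xok :: "nat \<Rightarrow> (nat \<Rightarrow> real) \<Rightarrow> bool" where
  "Xok j \<xi> \<longleftrightarrow> \<xi> 0 = \<tau> (a j) \<and> \<xi> (Ln j) = \<tau> (b j) \<and> (bent j \<longrightarrow> \<xi> (n1 j) = \<tau> (w j)) \<and>
     (\<forall>k<Ln j. \<xi> k < \<xi> (Suc k)) \<and>
     (\<forall>k. 0 < k \<and> k < Ln j \<and> \<not> (bent j \<and> k = n1 j) \<longrightarrow> \<xi> k \<notin> Z (stk j k)) \<and>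
     (\<forall>k<Ln j. \<forall>x\<in>Z (stk j k). \<forall>y\<in>Z (stk j k). \<xi> k \<le> x \<and> x \<le> \<xi> (Suc k) \<and> \<xi> k \<le> y \<and> y \<le> \<xi> (Suc k) \<longrightarrow> x = y)"

lemma Z_sub_open: "s \<in> H \<Longrightarrow> Z s \<subseteq> {lo s<..<hi s}"
proof
  fix x assume "x \<in> Z s" then show "x \<in> {lo s<..<hi s}" using Z_in[of x s] by simp
qed

lemma Xok_exists: assumes "j < f" shows "\<exists>\<xi>. Xok j \<xi>"
proof (cases "bent j")
  case False
  let ?s = "(a j, b j)"
  have sH: "?s \<in> H" using H_intro[OF assms] False unfolding strokes_def by auto
  have "card (Z ?s) \<le> Ln j" using Z_card[OF sH] B1[OF assms False] Ln_ge[OF assms] by linarith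
  then obtain \<xi> where x: "subdiv_ok \<xi> (Ln j) (lo ?s) (hi ?s) (Z ?s)"
    using subdiv[OF Z_fin[OF sH] Z_sub_open[OF sH] _ Ln_ge1[OF assms] lo_hi[OF sH]] by blast
  have "stk j k = ?s" for k unfolding stk_def using False by auto
  then have "Xok j \<xi>" using x False unfolding Xok_def subdiv_ok_def lo_def hi_def by auto
  then show ?thesis by blast
next
  case True
  let ?s1 = "(a j, w j)" and ?s2 = "(w j, b j)"
  have sH: "?s1 \<in> H" "?s2 \<in> H" using H_intro[OF assms] True unfolding strokes_def by auto
  have nb: "1 \<le> n1 j" "n1 j < Ln j" using n1_bounds[OF assms True] by auto
  have c1: "card (Z ?s1) \<le> n1 j" using Z_card[OF sH(1)] B2[OF assms True] unfolding n1_def by linarith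
  have cA: "card (CR ?s2) + card (Aset j) \<le> f - 2" using B3[OF assms True] .
  have L: "Ln j \<ge> f - 1" "Ln j \<ge> 2" using Ln_ge[OF assms] bent_len[OF assms True] by auto
  have c2: "card (Z ?s2) \<le> Ln j - n1 j"
  proof -
    have "card (Z ?s2) \<le> card (CR ?s2)" using Z_card[OF sH(2)] .
    moreover have "card (CR ?s2) \<le> Ln j - n1 j"
    proof (cases "card (Aset j) \<ge> 1")
      case True then have "n1 j = card (Aset j)" unfolding n1_def by auto
      then show ?thesis using cA L by linarith
    next
      case False then have "n1 j = 1" unfolding n1_def by auto
      then show ?thesis using cA L by linarith
    qed
    ultimately show ?thesis by linarith
  qed
  have l2: "1 \<le> Ln j - n1 j" using nb by auto
  obtain \<xi>1 where x1: "subdiv_ok \<xi>1 (n1 j) (lo ?s1) (hi ?s1) (Z ?s1)"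
    using subdiv[OF Z_fin[OF sH(1)] Z_sub_open[OF sH(1)] c1 nb(1) lo_hi[OF sH(1)]] by blast
  obtain \<xi>2 where x2: "subdiv_ok \<xi>2 (Ln j - n1 j) (lo ?s2) (hi ?s2) (Z ?s2)"
    using subdiv[OF Z_fin[OF sH(2)] Z_sub_open[OF sH(2)] c2 l2 lo_hi[OF sH(2)]] by blast
  define \<xi> where "\<xi> k = (if k \<le> n1 j then \<xi>1 k else \<xi>2 (k - n1 j))" for k
  have X1: "\<xi>1 0 = \<tau> (a j)" "\<xi>1 (n1 j) = \<tau> (w j)" "\<forall>k<n1 j. \<xi>1 k < \<xi>1 (Suc k)"
     "\<forall>k. 0 < k \<and> k < n1 j \<longrightarrow> \<xi>1 k \<notin> Z ?s1"
     "\<forall>k<n1 j. \<forall>x\<in>Z ?s1. \<forall>y\<in>Z ?s1. \<xi>1 k \<le> x \<and> x \<le> \<xi>1 (Suc k) \<and> \<xi>1 k \<le> y \<and> y \<le> \<xi>1 (Suc k) \<longrightarrow> x = y"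
    using x1 unfolding subdiv_ok_def lo_def hi_def by auto
  have X2: "\<xi>2 0 = \<tau> (w j)" "\<xi>2 (Ln j - n1 j) = \<tau> (b j)" "\<forall>k<Ln j - n1 j. \<xi>2 k < \<xi>2 (Suc k)"
     "\<forall>k. 0 < k \<and> k < Ln j - n1 j \<longrightarrow> \<xi>2 k \<notin> Z ?s2"
     "\<forall>k<Ln j - n1 j. \<forall>x\<in>Z ?s2. \<forall>y\<in>Z ?s2. \<xi>2 k \<le> x \<and> x \<le> \<xi>2 (Suc k) \<and> \<xi>2 k \<le> y \<and> y \<le> \<xi>2 (Suc k) \<longrightarrow> x = y"
    using x2 unfolding subdiv_ok_def lo_def hi_def by auto
  have hi2: "\<xi> k = \<xi>2 (k - n1 j)" if "n1 j \<le> k" for k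
    using that X1(2) X2(1) unfolding \<xi>_def by (cases "k = n1 j") auto
  have st1: "stk j k = ?s1" if "k < n1 j" for k using that True unfolding stk_def by auto
  have st2: "stk j k = ?s2" if "n1 j \<le> k" for k using that True unfolding stk_def by auto
  have p1: "\<xi> 0 = \<tau> (a j)" "\<xi> (Ln j) = \<tau> (b j)" "\<xi> (n1 j) = \<tau> (w j)"
    using X1(1,2) hi2[of "Ln j"] X2(2) nb unfolding \<xi>_def by auto
  have p2: "\<forall>k<Ln j. \<xi> k < \<xi> (Suc k)"
  proof (intro allI impI)
    fix k assume k: "k < Ln j"
    show "\<xi> k < \<xi> (Suc k)"
    proof (cases "k < n1 j")
      case True then show ?thesis unfolding \<xi>_def using X1(3) by auto
    next
      case False
      then have "\<xi> k = \<xi>2 (k - n1 j)" "\<xi> (Suc k) = \<xi>2 (Suc (k - n1 j))" using hi2[of k] hi2[of "Suc k"] by (auto simp: Suc_diff_le)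
      moreover have "k - n1 j < Ln j - n1 j" using k False by auto
      ultimately show ?thesis using X2(3) by auto
    qed
  qed
  have p3: "\<forall>k. 0 < k \<and> k < Ln j \<and> \<not> (bent j \<and> k = n1 j) \<longrightarrow> \<xi> k \<notin> Z (stk j k)"
  proof (intro allI impI)
    fix k assume k: "0 < k \<and> k < Ln j \<and> \<not> (bent j \<and> k = n1 j)"
    show "\<xi> k \<notin> Z (stk j k)"
    proof (cases "k < n1 j")
      case True then show ?thesis unfolding \<xi>_def using X1(4) st1 k by auto
    next
      case False
      then have "n1 j < k" using k True by auto
      then show ?thesis using hi2[of k] st2[of k] X2(4) k by auto
    qed
  qed
  have p4: "\<forall>k<Ln j. \<forall>x\<in>Z (stk j k). \<forall>y\<in>Z (stk j k). \<xi> k \<le> x \<and> x \<le> \<xi> (Suc k) \<and> \<xi> k \<le> y \<and> y \<le> \<xi> (Suc k) \<longrightarrow> x = y"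
  proof (intro allI impI ballI)
    fix k x y assume k: "k < Ln j" and x: "x \<in> Z (stk j k)" and y: "y \<in> Z (stk j k)"
      and r: "\<xi> k \<le> x \<and> x \<le> \<xi> (Suc k) \<and> \<xi> k \<le> y \<and> y \<le> \<xi> (Suc k)"
    show "x = y"
    proof (cases "k < n1 j")
      case True
      then have "\<xi> k = \<xi>1 k" "\<xi> (Suc k) = \<xi>1 (Suc k)" unfolding \<xi>_def by auto
      then show ?thesis using X1(5) True st1[OF True] x y r by auto
    next
      case False
      then have "\<xi> k = \<xi>2 (k - n1 j)" "\<xi> (Suc k) = \<xi>2 (Suc (k - n1 j))" using hi2[of k] hi2[of "Suc k"] by (auto simp: Suc_diff_le)
      moreover have "k - n1 j < Ln j - n1 j" using k False by auto
      ultimately show ?thesis using X2(5) st2[of k] False x y r by auto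
    qed
  qed
  have "Xok j \<xi>" unfolding Xok_def using p1 p2 p3 p4 by blast
  then show ?thesis by blast
qed

lemma X_exists: "\<exists>X. \<forall>j<f. Xok j (X j)"
  using Xok_exists by metis

end


locale G3 = G2 +
  fixes X :: "nat \<Rightarrow> nat \<Rightarrow> real"
  assumes Xok: "\<forall>j<f. Xok j (X j)"
begin

definition pl :: "'a \<times> 'a \<Rightarrow> real \<Rightarrow> real^2" where "pl s x = pt x (ln s x)"
definition vp :: "nat \<Rightarrow> nat \<Rightarrow> real^2" where "vp j k = pl (stk j k) (X j k)"
definition jkok :: "'a \<Rightarrow> nat \<times> nat \<Rightarrow> bool" where
  "jkok v jk \<longleftrightarrow> fst jk < f \<and> 0 < snd jk \<and> snd jk < Ln (fst jk) \<and> P (fst jk) ! snd jk = v"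
definition p :: "'a \<Rightarrow> real^2" where
  "p v = (if v \<in> C then pt (\<tau> v) ((\<tau> v)^2) else (let jk = SOME jk. jkok v jk in vp (fst jk) (snd jk)))"
definition ss :: "nat \<Rightarrow> nat \<Rightarrow> nat" where "ss j k = (if bent j \<and> n1 j \<le> k then n1 j else 0)"
definition se :: "nat \<Rightarrow> nat \<Rightarrow> nat" where "se j k = (if bent j \<and> k < n1 j then n1 j else Ln j)"

lemma X0: "j < f \<Longrightarrow> X j 0 = \<tau> (a j)" using Xok unfolding Xok_def by auto
lemma XL: "j < f \<Longrightarrow> X j (Ln j) = \<tau> (b j)" using Xok unfolding Xok_def by auto
lemma Xn1: "j < f \<Longrightarrow> bent j \<Longrightarrow> X j (n1 j) = \<tau> (w j)" using Xok unfolding Xok_def by auto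
lemma Xstep: "j < f \<Longrightarrow> \<forall>k<Ln j. X j k < X j (Suc k)" using Xok unfolding Xok_def by auto
lemma Xavoid: "j < f \<Longrightarrow> 0 < k \<Longrightarrow> k < Ln j \<Longrightarrow> \<not> (bent j \<and> k = n1 j) \<Longrightarrow> X j k \<notin> Z (stk j k)"
  using Xok unfolding Xok_def by auto
lemma Xpiece: "j < f \<Longrightarrow> k < Ln j \<Longrightarrow> x \<in> Z (stk j k) \<Longrightarrow> y \<in> Z (stk j k) \<Longrightarrow>
   X j k \<le> x \<Longrightarrow> x \<le> X j (Suc k) \<Longrightarrow> X j k \<le> y \<Longrightarrow> y \<le> X j (Suc k) \<Longrightarrow> x = y"
  using Xok unfolding Xok_def by blast

lemma Xlt: "j < f \<Longrightarrow> i < k \<Longrightarrow> k \<le> Ln j \<Longrightarrow> X j i < X j k"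
  using mono_chain[OF Xstep] by blast
lemma Xle: "j < f \<Longrightarrow> i \<le> k \<Longrightarrow> k \<le> Ln j \<Longrightarrow> X j i \<le> X j k"
  using mono_chain_le[OF Xstep] by blast
lemma Xinj: "j < f \<Longrightarrow> i \<le> Ln j \<Longrightarrow> k \<le> Ln j \<Longrightarrow> X j i = X j k \<Longrightarrow> i = k"
  using Xlt[of j i k] Xlt[of j k i] by (cases i k rule: linorder_cases) auto

lemma stk_strokes: "stk j k \<in> strokes j" unfolding stk_def strokes_def by auto

lemma stk_same_path: "j < f \<Longrightarrow> j' < f \<Longrightarrow> stk j k = stk j' k' \<Longrightarrow> j = j'"
  using stroke_owner[of j j' "stk j k"] stk_strokes[of j k] stk_strokes[of j' k'] by auto

lemma aw_ne: "j < f \<Longrightarrow> bent j \<Longrightarrow> a j \<noteq> w j" using w_ne_a by metis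

lemma ss_se: assumes "j < f"
  shows "lo (stk j k) = X j (ss j k)" "hi (stk j k) = X j (se j k)"
    "fst (stk j k) = P j ! ss j k" "snd (stk j k) = P j ! se j k"
  using X0[OF assms] XL[OF assms] Xn1[OF assms] unfolding lo_def hi_def stk_def ss_def se_def a_def b_def w_def
  by auto

lemma ss_le: "ss j k \<le> k" unfolding ss_def by auto
lemma se_ge: "k < Ln j \<Longrightarrow> Suc k \<le> se j k" unfolding se_def by auto
lemma se_le: "j < f \<Longrightarrow> se j k \<le> Ln j" unfolding se_def using n1_bounds by (auto simp: less_imp_le)
lemma se_ge': "k \<le> Ln j \<Longrightarrow> k \<le> se j k" unfolding se_def by auto

lemma stk_eq_idx: assumes "j < f" "stk j k = stk j k'" shows "ss j k = ss j k'" "se j k = se j k'"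
proof -
  have "bent j \<Longrightarrow> (k < n1 j) = (k' < n1 j)"
    using assms aw_ne[OF assms(1)] unfolding stk_def by (auto split: if_splits)
  then show "ss j k = ss j k'" "se j k = se j k'" unfolding ss_def se_def by auto
qed

lemma edge_next: assumes "j < f" "k < Ln j" shows "vp j (Suc k) = pl (stk j k) (X j (Suc k))"
proof (cases "stk j (Suc k) = stk j k")
  case True then show ?thesis unfolding vp_def by simp
next
  case False
  then have b: "bent j" "Suc k = n1 j" unfolding stk_def by (auto split: if_splits)
  then have st: "stk j k = (a j, w j)" "stk j (Suc k) = (w j, b j)" unfolding stk_def by auto
  have x: "X j (Suc k) = \<tau> (w j)" using Xn1[OF assms(1) b(1)] b(2) by simp
  have "ln (w j, b j) (\<tau> (w j)) = ln (a j, w j) (\<tau> (w j))"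
    using lnf_at_end(1)[of \<tau> "(w j, b j)"] lnf_at_end(2)[of \<tau> "(a j, w j)"] by simp
  then show ?thesis unfolding vp_def pl_def using st x by simp
qed


lemma interior_notC: assumes "j < f" "0 < k" "k < Ln j" "\<not> (bent j \<and> k = n1 j)" shows "P j ! k \<notin> C"
proof
  assume "P j ! k \<in> C"
  then have "P j ! k \<in> K \<or> (\<exists>i<f. bent i \<and> P j ! k = w i)" using C_cases by auto
  then show False
  proof
    assume "P j ! k \<in> K"
    moreover have "P j ! k \<in> Intv" unfolding Intv_def using assms by blast
    ultimately show False unfolding K_def by auto
  next
    assume "\<exists>i<f. bent i \<and> P j ! k = w i"
    then obtain i where i: "i < f" "bent i" "P j ! k = w i" by auto
    have "0 < n1 i" "n1 i < Ln i" using n1_bounds[OF i(1,2)] by auto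
    then have "j = i \<and> k = n1 i" using internal_unique[of i "n1 i" j k] i assms unfolding w_def by auto
    then show False using assms(4) i(2) by auto
  qed
qed

lemma ln_end_lo: "ln s (lo s) = (lo s)^2" using ln_lo by simp
lemma ln_end_hi: "ln s (hi s) = (hi s)^2" using ln_hi by simp

lemma vertex_cases:
  assumes "j < f" "k \<le> Ln j"
  shows "(k = ss j k \<and> P j ! k = fst (stk j k)) \<or> (k = se j k \<and> P j ! k = snd (stk j k)) \<or>
         (ss j k < k \<and> k < se j k \<and> 0 < k \<and> k < Ln j \<and> \<not> (bent j \<and> k = n1 j))"
proof -
  have "ss j k \<le> k" "k \<le> se j k" "se j k \<le> Ln j" using ss_le se_ge' se_le assms by auto
  moreover have "bent j \<Longrightarrow> k = n1 j \<Longrightarrow> ss j k = k" unfolding ss_def by auto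
  ultimately show ?thesis using ss_se(3,4)[OF assms(1), of k] by (cases "k = ss j k"; cases "k = se j k") auto
qed

lemma stk_C: "j < f \<Longrightarrow> fst (stk j k) \<in> C \<and> snd (stk j k) \<in> C" using H_C stk_H by blast

lemma p_vp: assumes "j < f" "k \<le> Ln j" shows "p (P j ! k) = vp j k"
proof -
  from vertex_cases[OF assms] show ?thesis
  proof (elim disjE conjE)
    assume k: "k = ss j k" and v: "P j ! k = fst (stk j k)"
    have "X j k = lo (stk j k)" using ss_se(1)[OF assms(1), of k] k by simp
    moreover have "lo (stk j k) = \<tau> (P j ! k)" using v unfolding lo_def by simp
    ultimately show ?thesis using stk_C[OF assms(1), of k] v ln_end_lo[of "stk j k"]
      unfolding p_def vp_def pl_def by auto
  next
    assume k: "k = se j k" and v: "P j ! k = snd (stk j k)"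
    have "X j k = hi (stk j k)" using ss_se(2)[OF assms(1), of k] k by simp
    moreover have "hi (stk j k) = \<tau> (P j ! k)" using v unfolding hi_def by simp
    ultimately show ?thesis using stk_C[OF assms(1), of k] v ln_end_hi[of "stk j k"]
      unfolding p_def vp_def pl_def by auto
  next
    assume i: "0 < k" "k < Ln j" "\<not> (bent j \<and> k = n1 j)"
    have nC: "P j ! k \<notin> C" using interior_notC[OF assms(1) i] .
    have ex: "jkok (P j ! k) (j, k)" unfolding jkok_def using assms i by auto
    define jk where "jk = (SOME jk. jkok (P j ! k) jk)"
    have "jkok (P j ! k) jk" unfolding jk_def using someI[of "jkok (P j ! k)", OF ex] .
    then have "fst jk < f" "0 < snd jk" "snd jk < Ln (fst jk)" "P (fst jk) ! snd jk = P j ! k"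
      unfolding jkok_def by auto
    then have "fst jk = j \<and> snd jk = k" using internal_unique[of "fst jk" "snd jk" j k] assms by auto
    then show ?thesis using nC unfolding p_def jk_def[symmetric] Let_def by auto
  qed
qed

lemma pl_eq: "pl s x = pl s' x' \<longleftrightarrow> x = x' \<and> ln s x = ln s' x'" unfolding pl_def by simp

lemma seg_edge: assumes "j < f" "k < Ln j"
  shows "seg p (eo j k) = pl (stk j k) ` {X j k .. X j (Suc k)}"
proof -
  let ?s = "stk j k"
  have e: "p ` eo j k = {p (P j ! k), p (P j ! Suc k)}" unfolding eo_def by auto
  have p1: "p (P j ! k) = pl ?s (X j k)" using p_vp[OF assms(1)] assms(2) unfolding vp_def by auto
  have p2: "p (P j ! Suc k) = pl ?s (X j (Suc k))" using p_vp[OF assms(1), of "Suc k"] assms(2) edge_next[OF assms] by auto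
  have le: "X j k \<le> X j (Suc k)" using Xstep[OF assms(1)] assms(2) by (simp add: less_imp_le)
  let ?m = "\<tau> (fst ?s) + \<tau> (snd ?s)" and ?c = "- (\<tau> (fst ?s) * \<tau> (snd ?s))"
  have lnm: "pl ?s x = pt x (?m * x + ?c)" for x unfolding pl_def lnf_def by simp
  have "seg p (eo j k) = closed_segment (p (P j ! k)) (p (P j ! Suc k))"
    unfolding seg_def e by (simp add: segment_convex_hull)
  also have "\<dots> = closed_segment (pt (X j k) (?m * X j k + ?c)) (pt (X j (Suc k)) (?m * X j (Suc k) + ?c))"
    using p1 p2 lnm by simp
  also have "\<dots> = (\<lambda>x. pt x (?m * x + ?c)) ` {X j k .. X j (Suc k)}" by (rule seg_line[OF le])
  also have "\<dots> = pl ?s ` {X j k .. X j (Suc k)}" using lnm by simp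
  finally show ?thesis .
qed


lemma lines_once: assumes "s \<in> H" "s' \<in> H" "s \<noteq> s'" "ln s x = ln s' x" "ln s y = ln s' y" shows "x = y"
proof (rule ccontr)
  assume ne: "x \<noteq> y"
  let ?m1 = "\<tau> (fst s) + \<tau> (snd s)" and ?m2 = "\<tau> (fst s') + \<tau> (snd s')"
  let ?p1 = "\<tau> (fst s) * \<tau> (snd s)" and ?p2 = "\<tau> (fst s') * \<tau> (snd s')"
  have "(?m1 - ?m2) * x = ?p1 - ?p2" "(?m1 - ?m2) * y = ?p1 - ?p2"
    using assms(4,5) unfolding lnf_def by (simp_all add: algebra_simps)
  then have "(?m1 - ?m2) * (x - y) = 0" by (simp add: algebra_simps)
  then have m: "?m1 = ?m2" using ne by simp
  then have "?p1 = ?p2" using \<open>(?m1 - ?m2) * x = ?p1 - ?p2\<close> by simp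
  moreover have "?p1 \<noteq> ?p2" using lines_distinct[OF tmono subset_refl _ _ assms(3) m] assms(1,2) HS_C by auto
  ultimately show False by simp
qed

definition intv :: "nat \<Rightarrow> nat \<Rightarrow> bool" where
  "intv j k \<longleftrightarrow> j < f \<and> 0 < k \<and> k < Ln j \<and> \<not> (bent j \<and> k = n1 j)"

lemma V_cases: assumes "v \<in> V" shows "v \<in> C \<or> (\<exists>j k. intv j k \<and> v = P j ! k)"
proof (cases "v \<in> C")
  case False
  then have "v \<notin> K" using K_C by auto
  then have "v \<in> Intv" using assms unfolding K_def by auto
  then obtain j k where jk: "j < f" "0 < k" "k < Ln j" "v = P j ! k" unfolding Intv_def by auto
  have "\<not> (bent j \<and> k = n1 j)" using False jk w_C[of j] unfolding w_def by auto
  then show ?thesis using jk unfolding intv_def by auto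
qed auto

lemma intv_props: assumes "intv j k"
  shows "lo (stk j k) < X j k" "X j k < hi (stk j k)" "X j k \<notin> Z (stk j k)" "P j ! k \<notin> C"
    "p (P j ! k) = pl (stk j k) (X j k)" "P j ! k \<in> V"
proof -
  have a: "j < f" "0 < k" "k < Ln j" "\<not> (bent j \<and> k = n1 j)" using assms unfolding intv_def by auto
  have k: "ss j k < k" "k < se j k" "se j k \<le> Ln j"
    using a se_le[OF a(1)] unfolding ss_def se_def by auto
  show "lo (stk j k) < X j k" using Xlt[OF a(1) k(1)] a ss_se(1)[OF a(1)] by auto
  show "X j k < hi (stk j k)" using Xlt[OF a(1) k(2) k(3)] ss_se(2)[OF a(1)] by auto
  show "X j k \<notin> Z (stk j k)" using Xavoid a by auto
  show "P j ! k \<notin> C" using interior_notC a by auto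
  show "p (P j ! k) = pl (stk j k) (X j k)" using p_vp[OF a(1)] a unfolding vp_def by auto
  show "P j ! k \<in> V" using inV a by auto
qed

lemma p_C: "v \<in> C \<Longrightarrow> p v = pt (\<tau> v) ((\<tau> v)^2)" unfolding p_def by auto

lemma pt_pl: "pt t (t^2) = pl s x \<longleftrightarrow> x = t \<and> ln s t = t^2" unfolding pl_def by auto

lemma inj_p: "inj_on p V"
proof (rule inj_onI)
  fix u v assume u: "u \<in> V" and v: "v \<in> V" and e: "p u = p v"
  have cv: "False" if "c \<in> C" "intv j k" "p c = p (P j ! k)" for c j k
  proof -
    have "pt (\<tau> c) ((\<tau> c)^2) = pl (stk j k) (X j k)" using that intv_props[OF that(2)] p_C by auto
    then have "X j k = \<tau> c" "ln (stk j k) (X j k) = (X j k)^2" using pt_pl by auto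
    then show False using ln_above[OF intv_props(1,2)[OF that(2)]] by simp
  qed
  from V_cases[OF u] V_cases[OF v] show "u = v"
  proof (elim disjE exE conjE)
    assume "u \<in> C" "v \<in> C" then show ?thesis using e p_C tinj by auto
  next
    fix j k assume "u \<in> C" "intv j k" "v = P j ! k" then show ?thesis using cv e by auto
  next
    fix j k assume h: "v \<in> C" "intv j k" "u = P j ! k"
    then have "p v = p (P j ! k)" using e by simp
    then show ?thesis using cv[OF h(1,2)] by simp
  next
    fix j k j' k' assume i1: "intv j k" "u = P j ! k" and i2: "intv j' k'" "v = P j' ! k'"
    have eq: "pl (stk j k) (X j k) = pl (stk j' k') (X j' k')" using e i1 i2 intv_props(5) by auto
    then have x: "X j k = X j' k'" "ln (stk j k) (X j k) = ln (stk j' k') (X j k)" using pl_eq by auto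
    have j: "j < f" "j' < f" "k \<le> Ln j" "k' \<le> Ln j'" using i1 i2 unfolding intv_def by auto
    show "u = v"
    proof (cases "stk j k = stk j' k'")
      case True
      then have "j = j'" using stk_same_path j by auto
      then have "k = k'" using Xinj[of j k k'] x j by auto
      then show ?thesis using i1 i2 \<open>j = j'\<close> by simp
    next
      case False
      have "gx (stk j k) (stk j' k') (X j k)"
        unfolding gx_def using intv_props(1,2)[OF i1(1)] intv_props(1,2)[OF i2(1)] x by auto
      then have "X j k \<in> Z (stk j k)" unfolding Z_def using stk_H[OF j(2), of k'] False by (intro CollectI bexI[of _ "stk j' k'"]) auto
      then show ?thesis using intv_props(3)[OF i1(1)] by simp
    qed
  qed
qed

lemma seg_mem: assumes "j < f" "k < Ln j"
  shows "z \<in> seg p (eo j k) \<longleftrightarrow> (\<exists>x. X j k \<le> x \<and> x \<le> X j (Suc k) \<and> z = pl (stk j k) x)"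
  using seg_edge[OF assms] by auto

lemma edge_range: assumes "j < f" "k < Ln j"
  shows "lo (stk j k) \<le> X j k" "X j (Suc k) \<le> hi (stk j k)"
  using Xle[OF assms(1) ss_le] ss_se(1,2)[OF assms(1)] Xle[OF assms(1) se_ge[OF assms(2)] se_le[OF assms(1)]]
    assms by (auto simp: less_imp_le)

lemma edge_at_lo: assumes "j < f" "k < Ln j" "X j k \<le> x" "x = lo (stk j k)"
  shows "fst (stk j k) = P j ! k"
proof -
  have "X j k = X j (ss j k)" using edge_range[OF assms(1,2)] assms(3,4) ss_se(1)[OF assms(1)] by auto
  then have "k = ss j k" using Xinj[of j k "ss j k"] ss_le[of j k] assms(1,2) by auto
  then show ?thesis using ss_se(3)[OF assms(1)] by metis
qed

lemma edge_at_hi: assumes "j < f" "k < Ln j" "x \<le> X j (Suc k)" "x = hi (stk j k)"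
  shows "snd (stk j k) = P j ! Suc k"
proof -
  have "X j (Suc k) = X j (se j k)" using edge_range[OF assms(1,2)] assms(3,4) ss_se(2)[OF assms(1)] by auto
  then have "Suc k = se j k" using Xinj[of j "Suc k" "se j k"] se_le[OF assms(1)] assms(1,2) by auto
  then show ?thesis using ss_se(4)[OF assms(1)] by metis
qed

lemma no_vertex_on_edge:
  assumes j: "j < f" "k < Ln j" and v: "v \<in> V" "v \<notin> eo j k"
  shows "p v \<notin> seg p (eo j k)"
proof
  assume "p v \<in> seg p (eo j k)"
  then obtain x where x: "X j k \<le> x" "x \<le> X j (Suc k)" "p v = pl (stk j k) x" using seg_mem[OF j] by auto
  let ?s = "stk j k"
  have rng: "lo ?s \<le> x" "x \<le> hi ?s" using edge_range[OF j] x by auto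
  from V_cases[OF v(1)] show False
  proof (elim disjE exE conjE)
    assume vC: "v \<in> C"
    then have "x = \<tau> v" "ln ?s x = x^2" using x(3) p_C pt_pl by auto
    then have "(x - lo ?s) * (x - hi ?s) = 0" using ln_alt[of ?s x] by simp
    then have "x = lo ?s \<or> x = hi ?s" by simp
    then show False
    proof
      assume xl: "x = lo ?s"
      then have "fst ?s = P j ! k" using edge_at_lo[OF j x(1)] by simp
      moreover have "\<tau> v = \<tau> (fst ?s)" using xl \<open>x = \<tau> v\<close> unfolding lo_def by simp
      then have "v = fst ?s" using tinj vC stk_C[OF j(1)] by auto
      ultimately show False using v(2) unfolding eo_def by auto
    next
      assume xh: "x = hi ?s"
      then have "snd ?s = P j ! Suc k" using edge_at_hi[OF j x(2)] by simp
      moreover have "\<tau> v = \<tau> (snd ?s)" using xh \<open>x = \<tau> v\<close> unfolding hi_def by simp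
      then have "v = snd ?s" using tinj vC stk_C[OF j(1)] by auto
      ultimately show False using v(2) unfolding eo_def by auto
    qed
  next
    fix j' k' assume i: "intv j' k'" "v = P j' ! k'"
    let ?s' = "stk j' k'"
    have j': "j' < f" "k' \<le> Ln j'" using i unfolding intv_def by auto
    have "pl ?s' (X j' k') = pl ?s x" using x(3) intv_props(5)[OF i(1)] i(2) by simp
    then have xe: "X j' k' = x" "ln ?s' x = ln ?s x" using pl_eq by auto
    show False
    proof (cases "?s' = ?s")
      case True
      then have "j' = j" using stk_same_path j' j by auto
      then have "k' = k \<or> k' = Suc k"
      proof -
        have "X j k \<le> X j k'" "X j k' \<le> X j (Suc k)" using xe x \<open>j' = j\<close> by auto
        then have "\<not> k' < k" "\<not> Suc k < k'" using Xlt[of j k' k] Xlt[of j "Suc k" k'] j j' \<open>j' = j\<close> by force+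
        then show ?thesis by auto
      qed
      then show False using v(2) i(2) \<open>j' = j\<close> unfolding eo_def by auto
    next
      case False
      have in': "lo ?s' < x" "x < hi ?s'" using intv_props(1,2)[OF i(1)] xe by auto
      have "ln ?s' x > x^2" using ln_above[OF in'] .
      then have "x \<noteq> lo ?s" "x \<noteq> hi ?s" using xe(2) ln_end_lo[of ?s] ln_end_hi[of ?s] by auto
      then have "lo ?s < x" "x < hi ?s" using rng by auto
      then have "gx ?s' ?s x" unfolding gx_def using in' xe by auto
      then have "x \<in> Z ?s'" unfolding Z_def using stk_H[OF j(1), of k] False by (intro CollectI bexI[of _ "?s"]) auto
      then show False using intv_props(3)[OF i(1)] xe by simp
    qed
  qed
qed


lemma vert_in_seg: assumes "j < f" "k < Ln j" "v \<in> eo j k" shows "p v \<in> seg p (eo j k)"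
  unfolding seg_def using assms(3) hull_subset[of "p ` eo j k" convex] by auto

lemma common:
  assumes j: "j < f" "k < Ln j" and j': "j' < f" "k' < Ln j'"
    and z: "z \<in> seg p (eo j k)" "z \<in> seg p (eo j' k')"
  shows "\<exists>x. z = pl (stk j k) x \<and> X j k \<le> x \<and> x \<le> X j (Suc k) \<and> X j' k' \<le> x \<and> x \<le> X j' (Suc k') \<and>
     ln (stk j k) x = ln (stk j' k') x"
proof -
  obtain x where x: "X j k \<le> x" "x \<le> X j (Suc k)" "z = pl (stk j k) x" using seg_mem[OF j] z(1) by auto
  obtain x' where x': "X j' k' \<le> x'" "x' \<le> X j' (Suc k')" "z = pl (stk j' k') x'" using seg_mem[OF j'] z(2) by auto
  have "x = x'" "ln (stk j k) x = ln (stk j' k') x" using x(3) x'(3) pl_eq by auto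
  then show ?thesis using x x' by auto
qed

lemma same_stroke_disjoint:
  assumes j: "j < f" "k < Ln j" "k' < Ln j" "Suc k < k'"
  shows "seg p (eo j k) \<inter> seg p (eo j k') = {}"
proof -
  have lt: "X j (Suc k) < X j k'" using Xlt[OF j(1) j(4)] j(3) by auto
  have False if zz: "z \<in> seg p (eo j k)" "z \<in> seg p (eo j k')" for z
  proof -
    obtain x where x: "x \<le> X j (Suc k)" "z = pl (stk j k) x" using seg_mem[OF j(1,2)] zz(1) by auto
    obtain x' where x': "X j k' \<le> x'" "z = pl (stk j k') x'" using seg_mem[OF j(1,3)] zz(2) by auto
    have "x = x'" using x(2) x'(2) pl_eq by auto
    then show False using x(1) x'(1) lt by simp
  qed
  then show ?thesis by blast
qed

lemma eo_idx: assumes "j < f" "k < Ln j" "k' < Ln j" "eo j k \<inter> eo j k' \<noteq> {}" "k \<noteq> k'"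
  shows "k' = Suc k \<or> k = Suc k'"
proof -
  obtain v where v: "v \<in> eo j k" "v \<in> eo j k'" using assms(4) by auto
  have "(P j ! k = P j ! k' \<or> P j ! k = P j ! Suc k' \<or> P j ! Suc k = P j ! k' \<or> P j ! Suc k = P j ! Suc k')"
    using v unfolding eo_def by auto
  then have "k = k' \<or> k = Suc k' \<or> Suc k = k' \<or> Suc k = Suc k'"
    using nth_inj[OF assms(1)] assms(2,3) by (metis Suc_leI less_imp_le_nat)
  then show ?thesis using assms(5) by auto
qed

lemma E3:
  assumes j: "j < f" "k < Ln j" and j': "j' < f" "k' < Ln j'"
    and ne: "eo j k \<noteq> eo j' k'" and sh: "eo j k \<inter> eo j' k' \<noteq> {}"
  shows "seg p (eo j k) \<inter> seg p (eo j' k') = p ` (eo j k \<inter> eo j' k')"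
proof
  show "p ` (eo j k \<inter> eo j' k') \<subseteq> seg p (eo j k) \<inter> seg p (eo j' k')"
    using vert_in_seg[OF j] vert_in_seg[OF j'] by auto
  show "seg p (eo j k) \<inter> seg p (eo j' k') \<subseteq> p ` (eo j k \<inter> eo j' k')"
  proof
    fix z assume "z \<in> seg p (eo j k) \<inter> seg p (eo j' k')"
    then obtain x where x: "z = pl (stk j k) x" "X j k \<le> x" "x \<le> X j (Suc k)" "X j' k' \<le> x" "x \<le> X j' (Suc k')"
      "ln (stk j k) x = ln (stk j' k') x" using common[OF j j'] by blast
    obtain v where v: "v \<in> eo j k" "v \<in> eo j' k'" using sh by auto
    show "z \<in> p ` (eo j k \<inter> eo j' k')"
    proof (cases "stk j k = stk j' k'")
      case True
      then have jj: "j' = j" using stk_same_path j j' by auto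
      have kk: "k \<noteq> k'" using ne jj by auto
      have "k' = Suc k \<or> k = Suc k'" using eo_idx[OF j(1,2) _ _ kk] j' jj sh by auto
      then show ?thesis
      proof
        assume h: "k' = Suc k"
        then have "x = X j (Suc k)" using x jj by auto
        moreover have "p (P j ! Suc k) = pl (stk j k) (X j (Suc k))" using p_vp[OF j(1)] edge_next[OF j] j by auto
        moreover have "P j ! Suc k \<in> eo j k \<inter> eo j' k'" using h jj unfolding eo_def by auto
        ultimately show ?thesis using x(1) by force
      next
        assume h: "k = Suc k'"
        then have "x = X j k" using x jj by auto
        moreover have "p (P j ! k) = pl (stk j k) (X j k)" using p_vp[OF j(1)] j unfolding vp_def by auto
        moreover have "P j ! k \<in> eo j k \<inter> eo j' k'" using h jj unfolding eo_def by auto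
        ultimately show ?thesis using x(1) by force
      qed
    next
      case False
      have "p v \<in> seg p (eo j k) \<inter> seg p (eo j' k')" using vert_in_seg[OF j v(1)] vert_in_seg[OF j' v(2)] by auto
      then obtain xv where xv: "p v = pl (stk j k) xv" "ln (stk j k) xv = ln (stk j' k') xv"
        using common[OF j j'] by blast
      have "x = xv" using lines_once[OF stk_H[OF j(1)] stk_H[OF j'(1)] False x(6) xv(2)] .
      then have "z = p v" using x(1) xv(1) by simp
      then show ?thesis using v by auto
    qed
  qed
qed

lemma E4:
  assumes j: "j < f" "k < Ln j" and j': "j' < f" "k' < Ln j'"
    and dj: "eo j k \<inter> eo j' k' = {}"
  shows "\<exists>x. seg p (eo j k) \<inter> seg p (eo j' k') \<subseteq> {x}"
proof (cases "stk j k = stk j' k'")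
  case True
  then have jj: "j' = j" using stk_same_path j j' by auto
  have kk: "k \<noteq> k'" using dj jj unfolding eo_def by auto
  have "\<not> (k' = Suc k \<or> k = Suc k')" using dj jj unfolding eo_def by auto
  then have "Suc k < k' \<or> Suc k' < k" using kk by auto
  then have "seg p (eo j k) \<inter> seg p (eo j' k') = {}"
    using same_stroke_disjoint[OF j(1,2)] same_stroke_disjoint[OF j(1) _ j(2)] j' jj by auto
  then show ?thesis by auto
next
  case False
  show ?thesis
  proof (cases "seg p (eo j k) \<inter> seg p (eo j' k') = {}")
    case True then show ?thesis by auto
  next
    case ne: False
    then obtain z0 where z0: "z0 \<in> seg p (eo j k) \<inter> seg p (eo j' k')" by auto
    obtain x0 where x0: "z0 = pl (stk j k) x0" "ln (stk j k) x0 = ln (stk j' k') x0"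
      using common[OF j j' IntD1[OF z0] IntD2[OF z0]] by blast
    have "z = z0" if zz: "z \<in> seg p (eo j k) \<inter> seg p (eo j' k')" for z
    proof -
      obtain x where x: "z = pl (stk j k) x" "ln (stk j k) x = ln (stk j' k') x"
        using common[OF j j' IntD1[OF zz] IntD2[OF zz]] by blast
      have "x = x0" using lines_once[OF stk_H[OF j(1)] stk_H[OF j'(1)] False x(2) x0(2)] .
      then show ?thesis using x x0 by simp
    qed
    then show ?thesis by blast
  qed
qed


lemma same_stk_empty:
  assumes j: "j < f" "k < Ln j" and j': "j' < f" "k' < Ln j'"
    and dj: "eo j k \<inter> eo j' k' = {}" and st: "stk j k = stk j' k'"
  shows "seg p (eo j k) \<inter> seg p (eo j' k') = {}"
proof -
  have jj: "j' = j" using stk_same_path j j' st by auto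
  have kk: "k \<noteq> k'" using dj jj unfolding eo_def by auto
  have "\<not> (k' = Suc k \<or> k = Suc k')" using dj jj unfolding eo_def by auto
  then have "Suc k < k' \<or> Suc k' < k" using kk by auto
  then show ?thesis
    using same_stroke_disjoint[OF j(1,2)] same_stroke_disjoint[OF j(1) _ j(2)] j' jj by auto
qed

lemma cross_point:
  assumes j: "j < f" "k < Ln j" and j': "j' < f" "k' < Ln j'"
    and dj: "eo j k \<inter> eo j' k' = {}" and z: "z \<in> seg p (eo j k)" "z \<in> seg p (eo j' k')"
  shows "\<exists>x. X j k \<le> x \<and> x \<le> X j (Suc k) \<and> X j' k' \<le> x \<and> x \<le> X j' (Suc k') \<and>
     stk j k \<noteq> stk j' k' \<and> gx (stk j k) (stk j' k') x"
proof -
  let ?s = "stk j k" and ?s' = "stk j' k'"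
  obtain x where x: "z = pl ?s x" "X j k \<le> x" "x \<le> X j (Suc k)" "X j' k' \<le> x" "x \<le> X j' (Suc k')"
    "ln ?s x = ln ?s' x" using common[OF j j' z] by blast
  have z': "z = pl ?s' x" using x(1,6) unfolding pl_def by simp
  have ne: "?s \<noteq> ?s'" using same_stk_empty[OF j j' dj] z by auto
  have vV: "\<And>jj kk. jj < f \<Longrightarrow> kk \<le> Ln jj \<Longrightarrow> P jj ! kk \<in> V" using inV by blast
  have r: "lo ?s \<le> X j k" "X j (Suc k) \<le> hi ?s" "lo ?s' \<le> X j' k'" "X j' (Suc k') \<le> hi ?s'"
    using edge_range[OF j] edge_range[OF j'] by auto
  have n1: "x \<noteq> lo ?s"
  proof
    assume h: "x = lo ?s"
    then have "X j k = x" using r x by auto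
    then have "p (P j ! k) = z" using p_vp[OF j(1)] j x(1) unfolding vp_def by auto
    moreover have "P j ! k \<notin> eo j' k'" using dj unfolding eo_def by auto
    ultimately show False using no_vertex_on_edge[OF j' vV[OF j(1)]] z(2) j by auto
  qed
  have n2: "x \<noteq> hi ?s"
  proof
    assume h: "x = hi ?s"
    then have "X j (Suc k) = x" using r x by auto
    then have "p (P j ! Suc k) = z" using p_vp[OF j(1), of "Suc k"] edge_next[OF j] j x(1) by auto
    moreover have "P j ! Suc k \<notin> eo j' k'" using dj unfolding eo_def by auto
    ultimately show False using no_vertex_on_edge[OF j' vV[OF j(1)]] z(2) j by auto
  qed
  have n3: "x \<noteq> lo ?s'"
  proof
    assume h: "x = lo ?s'"
    then have "X j' k' = x" using r x by auto
    then have "p (P j' ! k') = z" using p_vp[OF j'(1)] j' z' unfolding vp_def by auto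
    moreover have "P j' ! k' \<notin> eo j k" using dj unfolding eo_def by auto
    ultimately show False using no_vertex_on_edge[OF j vV[OF j'(1)]] z(1) j' by auto
  qed
  have n4: "x \<noteq> hi ?s'"
  proof
    assume h: "x = hi ?s'"
    then have "X j' (Suc k') = x" using r x by auto
    then have "p (P j' ! Suc k') = z" using p_vp[OF j'(1), of "Suc k'"] edge_next[OF j'] j' z' by auto
    moreover have "P j' ! Suc k' \<notin> eo j k" using dj unfolding eo_def by auto
    ultimately show False using no_vertex_on_edge[OF j vV[OF j'(1)]] z(1) j' by auto
  qed
  have "gx ?s ?s' x" unfolding gx_def using r x n1 n2 n3 n4 by auto
  then show ?thesis using x ne by blast
qed

lemma no_two_on_stroke:
  assumes j: "j < f" "k1 < Ln j" "k2 < Ln j" "k1 < k2" and st: "stk j k1 = stk j k2"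
    and x: "X j k1 \<le> x" "x \<le> X j (Suc k1)" "X j k2 \<le> x"
    and inn: "lo (stk j k1) < x" "x < hi (stk j k1)" and xZ: "x \<in> Z (stk j k1)"
  shows False
proof -
  have "X j (Suc k1) \<le> X j k2" using Xle[OF j(1), of "Suc k1" k2] j by auto
  then have xk: "x = X j k2" using x by auto
  have k2: "k2 \<le> Ln j" using j by auto
  from vertex_cases[OF j(1) k2] show False
  proof (elim disjE conjE)
    assume "k2 = ss j k2" "P j ! k2 = fst (stk j k2)"
    then have "X j k2 = lo (stk j k2)" using ss_se(1)[OF j(1), of k2] by simp
    then show False using inn xk st by simp
  next
    assume "k2 = se j k2" "P j ! k2 = snd (stk j k2)"
    then have "X j k2 = hi (stk j k2)" using ss_se(2)[OF j(1), of k2] by simp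
    then show False using inn xk st by simp
  next
    assume "ss j k2 < k2" "k2 < se j k2" "0 < k2" "k2 < Ln j" "\<not> (bent j \<and> k2 = n1 j)"
    then have "X j k2 \<notin> Z (stk j k2)" using Xavoid[OF j(1)] by auto
    then show False using xZ xk st by simp
  qed
qed

lemma crossing_le1: assumes j: "j < f" "k < Ln j" shows "card (crossing_edges E p (eo j k)) \<le> 1"
proof -
  let ?s = "stk j k"
  have key: "\<exists>j1 k1 x. j1 < f \<and> k1 < Ln j1 \<and> e1 = eo j1 k1 \<and> X j k \<le> x \<and> x \<le> X j (Suc k) \<and>
       X j1 k1 \<le> x \<and> x \<le> X j1 (Suc k1) \<and> stk j k \<noteq> stk j1 k1 \<and> gx (stk j k) (stk j1 k1) x"
    if e1: "e1 \<in> crossing_edges E p (eo j k)" for e1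
  proof -
    have e1E: "e1 \<in> E" "eo j k \<inter> e1 = {}" "seg p (eo j k) \<inter> seg p e1 \<noteq> {}"
      using e1 unfolding crossing_edges_def by auto
    obtain j1 k1 where jk1: "j1 < f" "k1 < Ln j1" "e1 = eo j1 k1" using E_eo[OF e1E(1)] by auto
    obtain z where z: "z \<in> seg p (eo j k)" "z \<in> seg p (eo j1 k1)" using e1E(3) jk1(3) by auto
    show ?thesis using cross_point[OF j jk1(1,2) _ z] e1E(2) jk1 by blast
  qed
  have "e1 = e2" if e1: "e1 \<in> crossing_edges E p (eo j k)" and e2: "e2 \<in> crossing_edges E p (eo j k)" for e1 e2
  proof -
    obtain j1 k1 x1 where h1: "j1 < f" "k1 < Ln j1" "e1 = eo j1 k1" "X j k \<le> x1" "x1 \<le> X j (Suc k)"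
       "X j1 k1 \<le> x1" "x1 \<le> X j1 (Suc k1)" "stk j k \<noteq> stk j1 k1" "gx (stk j k) (stk j1 k1) x1"
      using key[OF e1] by blast
    obtain j2 k2 x2 where h2: "j2 < f" "k2 < Ln j2" "e2 = eo j2 k2" "X j k \<le> x2" "x2 \<le> X j (Suc k)"
       "X j2 k2 \<le> x2" "x2 \<le> X j2 (Suc k2)" "stk j k \<noteq> stk j2 k2" "gx (stk j k) (stk j2 k2) x2"
      using key[OF e2] by blast
    have sH: "?s \<in> H" "stk j1 k1 \<in> H" "stk j2 k2 \<in> H" using stk_H j h1 h2 by auto
    have z1: "x1 \<in> Z ?s" unfolding Z_def using sH h1 by (intro CollectI bexI[of _ "stk j1 k1"]) auto
    have z2: "x2 \<in> Z ?s" unfolding Z_def using sH h2 by (intro CollectI bexI[of _ "stk j2 k2"]) auto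
    have xx: "x1 = x2" using Xpiece[OF j z1 z2] h1 h2 by auto
    have ss: "stk j1 k1 = stk j2 k2"
    proof (rule ccontr)
      assume "stk j1 k1 \<noteq> stk j2 k2"
      then show False using gx_NC[OF sH _ _ _ h1(9)] h1(8) h2(8) h2(9) xx by auto
    qed
    have jj: "j1 = j2" using stk_same_path h1(1) h2(1) ss by auto
    have g1: "gx (stk j1 k1) ?s x1" using h1(9) gx_sym by auto
    then have inn: "lo (stk j1 k1) < x1" "x1 < hi (stk j1 k1)" unfolding gx_def by auto
    have zz: "x1 \<in> Z (stk j1 k1)" unfolding Z_def using sH h1 g1 by (intro CollectI bexI[of _ ?s]) auto
    have "k1 = k2"
    proof (rule ccontr)
      assume "k1 \<noteq> k2"
      then show False
      proof (cases "k1 < k2")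
        case True
        show False using no_two_on_stroke[OF h1(1) h1(2) _ True, of x1] h2 jj ss h1 inn zz xx by auto
      next
        case False
        then have lt: "k2 < k1" using \<open>k1 \<noteq> k2\<close> by auto
        have inn2: "lo (stk j2 k2) < x2" "x2 < hi (stk j2 k2)" using inn ss xx by auto
        have zz2: "x2 \<in> Z (stk j2 k2)" using zz ss xx by simp
        show False using no_two_on_stroke[OF h2(1) h2(2) _ lt, of x2] h1 jj ss h2 inn2 zz2 xx by auto
      qed
    qed
    then show ?thesis using h1(3) h2(3) jj by simp
  qed
  moreover have "finite (crossing_edges E p (eo j k))" unfolding crossing_edges_def using finE by auto
  ultimately show ?thesis using card_le_Suc0_iff_eq by (metis One_nat_def)
qed

theorem embedding: "straight_line_embedding V E p"
  unfolding straight_line_embedding_def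
proof (intro conjI ballI impI)
  show "inj_on p V" by (rule inj_p)
next
  fix e w assume e: "e \<in> E" and w: "w \<in> V" "w \<notin> e"
  obtain j k where "j < f" "k < Ln j" "e = eo j k" using E_eo[OF e] by auto
  then show "p w \<notin> seg p e" using no_vertex_on_edge w by auto
next
  fix e e' assume e: "e \<in> E" "e' \<in> E" "e \<noteq> e'" "e \<inter> e' \<noteq> {}"
  obtain j k where jk: "j < f" "k < Ln j" "e = eo j k" using E_eo[OF e(1)] by auto
  obtain j' k' where jk': "j' < f" "k' < Ln j'" "e' = eo j' k'" using E_eo[OF e(2)] by auto
  show "seg p e \<inter> seg p e' = p ` (e \<inter> e')" using E3[OF jk(1,2) jk'(1,2)] e jk jk' by auto
next
  fix e e' assume e: "e \<in> E" "e' \<in> E" "e \<noteq> e'" "e \<inter> e' = {}"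
  obtain j k where jk: "j < f" "k < Ln j" "e = eo j k" using E_eo[OF e(1)] by auto
  obtain j' k' where jk': "j' < f" "k' < Ln j'" "e' = eo j' k'" using E_eo[OF e(2)] by auto
  show "\<exists>x. seg p e \<inter> seg p e' \<subseteq> {x}" using E4[OF jk(1,2) jk'(1,2)] e jk jk' by auto
qed

theorem g1p: "geometric_1_planar V E"
  unfolding geometric_1_planar_def
proof (intro exI conjI ballI)
  show "straight_line_embedding V E p" by (rule embedding)
next
  fix e assume "e \<in> E"
  then obtain j k where "j < f" "k < Ln j" "e = eo j k" using E_eo by blast
  then show "card (crossing_edges E p e) \<le> 1" using crossing_le1 by auto
qed

end


lemma rev_edge_set: assumes "Suc i < length ps"
  shows "{rev ps ! i, rev ps ! Suc i} = {ps ! (length ps - Suc (Suc i)), ps ! Suc (length ps - Suc (Suc i))}"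
proof -
  have "rev ps ! i = ps ! (length ps - Suc i)" "rev ps ! Suc i = ps ! (length ps - Suc (Suc i))"
    using assms by (auto simp: rev_nth)
  moreover have "Suc (length ps - Suc (Suc i)) = length ps - Suc i" using assms by auto
  ultimately show ?thesis by auto
qed

lemma path_edges_rev: "path_edges (rev ps) = path_edges ps"
proof
  show "path_edges (rev ps) \<subseteq> path_edges ps"
  proof
    fix e assume "e \<in> path_edges (rev ps)"
    then obtain i where i: "Suc i < length ps" "e = {rev ps ! i, rev ps ! Suc i}" unfolding path_edges_def by auto
    then have "e = {ps ! (length ps - Suc (Suc i)), ps ! Suc (length ps - Suc (Suc i))}" using rev_edge_set by auto
    moreover have "Suc (length ps - Suc (Suc i)) < length ps" using i by auto
    ultimately show "e \<in> path_edges ps" unfolding path_edges_def by blast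
  qed
next
  show "path_edges ps \<subseteq> path_edges (rev ps)"
  proof
    fix e assume "e \<in> path_edges ps"
    then obtain i where i: "Suc i < length ps" "e = {ps ! i, ps ! Suc i}" unfolding path_edges_def by auto
    let ?i' = "length ps - Suc (Suc i)"
    have "Suc ?i' < length (rev ps)" using i by auto
    moreover have "{rev ps ! ?i', rev ps ! Suc ?i'} = e"
    proof -
      have "rev ps ! ?i' = ps ! Suc i" "rev ps ! Suc ?i' = ps ! i" using i by (auto simp: rev_nth Suc_diff_Suc)
      then show ?thesis using i by auto
    qed
    ultimately show "e \<in> path_edges (rev ps)" unfolding path_edges_def by blast
  qed
qed

lemma degree2_path_rev: assumes "degree2_path V E ps" shows "degree2_path V E (rev ps)"
proof -
  have d: "ps \<noteq> []" "distinct ps" "set ps \<subseteq> V" "\<forall>i. Suc i < length ps \<longrightarrow> {ps ! i, ps ! Suc i} \<in> E"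
    "\<forall>i. 0 < i \<and> Suc i < length ps \<longrightarrow> degree E (ps ! i) = 2"
    using assms unfolding degree2_path_def by auto
  have e: "\<forall>i. Suc i < length (rev ps) \<longrightarrow> {rev ps ! i, rev ps ! Suc i} \<in> E"
  proof (intro allI impI)
    fix i assume i: "Suc i < length (rev ps)"
    then have "{rev ps ! i, rev ps ! Suc i} = {ps ! (length ps - Suc (Suc i)), ps ! Suc (length ps - Suc (Suc i))}"
      using rev_edge_set by auto
    moreover have "Suc (length ps - Suc (Suc i)) < length ps" using i by auto
    ultimately show "{rev ps ! i, rev ps ! Suc i} \<in> E" using d(4) by auto
  qed
  have g: "\<forall>i. 0 < i \<and> Suc i < length (rev ps) \<longrightarrow> degree E (rev ps ! i) = 2"
  proof (intro allI impI)
    fix i assume i: "0 < i \<and> Suc i < length (rev ps)"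
    then have "rev ps ! i = ps ! (length ps - Suc i)" by (auto simp: rev_nth)
    moreover have "0 < length ps - Suc i" "Suc (length ps - Suc i) < length ps" using i by auto
    ultimately show "degree E (rev ps ! i) = 2" using d(5) by auto
  qed
  show ?thesis unfolding degree2_path_def using d e g by auto
qed

theorem mainTheorem13:
  fixes V :: "'a set" and E :: "'a set set" and f :: nat and P :: "nat \<Rightarrow> 'a list"
  assumes "simple_graph V E"
    and "\<forall>i<f. degree2_path V E (P i)"
    and "\<forall>i<f. path_length (P i) \<ge> f - 1"
    and "\<forall>i<f. \<forall>j<f. i \<noteq> j \<longrightarrow> path_edges (P i) \<inter> path_edges (P j) = {}"
    and "(\<Union>i<f. path_edges (P i)) = E"
  shows "geometric_1_planar V E"
proof -
  have finV: "finite V" using assms(1) unfolding simple_graph_def by auto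
  obtain g :: "'a \<Rightarrow> nat" and n where g: "g ` V = {i. i < n}" "inj_on g V"
    using finite_imp_inj_to_nat_seg[OF finV] by blast
  show ?thesis
  proof (cases "\<forall>i<f. length (P i) \<ge> 2")
    case False
    then obtain i where i: "i < f" "length (P i) < 2" by auto
    have "P i \<noteq> []" using assms(2) i unfolding degree2_path_def by auto
    then have l1: "length (P i) = 1" using i by (cases "P i") auto
    then have "f - 1 \<le> 0" using assms(3) i unfolding path_length_def by force
    then have f1: "f = 1" using i by auto
    then have "E = path_edges (P 0)" using assms(5) by auto
    moreover have "i = 0" using i f1 by auto
    ultimately have E0: "E = {}" using l1 unfolding path_edges_def by auto
    define q where "q v = pt (real (g v)) 0" for v
    have "inj_on q V" using g(2) unfolding q_def inj_on_def by auto
    then have "straight_line_embedding V E q" unfolding straight_line_embedding_def using E0 by auto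
    then show ?thesis unfolding geometric_1_planar_def using E0 by auto
  next
    case True
    define Q where "Q i = (if g (P i ! 0) < g (P i ! (length (P i) - 1)) then P i else rev (P i))" for i
    have Q_len: "length (Q i) = length (P i)" for i unfolding Q_def by auto
    have Q_pe: "path_edges (Q i) = path_edges (P i)" for i unfolding Q_def using path_edges_rev by auto
    have Q_dp: "degree2_path V E (Q i)" if "i < f" for i
      unfolding Q_def using assms(2) that degree2_path_rev by auto
    have G0: "G0 V E f Q"
      unfolding G0_def using assms Q_len Q_pe Q_dp True unfolding path_length_def by auto
    have orient: "\<forall>j<f. g (Q j ! 0) < g (Q j ! G0.Ln Q j)"
    proof (intro allI impI)
      fix j assume j: "j < f"
      let ?L = "length (P j) - 1"
      have L: "G0.Ln Q j = ?L" using G0.Ln_def[OF G0] Q_len by simp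
      have len2: "length (P j) \<ge> 2" using True j by auto
      have dj: "distinct (P j)" using assms(2) j unfolding degree2_path_def by auto
      have ne: "P j ! 0 \<noteq> P j ! ?L"
      proof
        assume eq: "P j ! 0 = P j ! ?L"
        have l: "0 < length (P j)" "?L < length (P j)" using len2 by auto
        have "0 = ?L" using nth_eq_iff_index_eq[OF dj l] eq by simp
        then show False using len2 by auto
      qed
      have inV: "P j ! 0 \<in> V" "P j ! ?L \<in> V" using assms(2) j len2 unfolding degree2_path_def
        by (auto intro!: nth_mem[THEN subsetD[rotated]])
      have gne: "g (P j ! 0) \<noteq> g (P j ! ?L)" using g(2) inV ne unfolding inj_on_def by blast
      show "g (Q j ! 0) < g (Q j ! G0.Ln Q j)"
      proof (cases "g (P j ! 0) < g (P j ! ?L)")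
        case True then show ?thesis unfolding L Q_def by simp
      next
        case False
        have r: "rev (P j) ! 0 = P j ! ?L" "rev (P j) ! ?L = P j ! 0"
        proof -
          have l0: "0 < length (P j)" "?L < length (P j)" using len2 by auto
          have "Suc ?L = length (P j)" using len2 by auto
          then show "rev (P j) ! 0 = P j ! ?L" "rev (P j) ! ?L = P j ! 0"
            using rev_nth[OF l0(1)] rev_nth[OF l0(2)] by auto
        qed
        show ?thesis unfolding L Q_def using False gne r by auto
      qed
    qed
    have G1: "G1 V E f Q g" using G0 orient g(2) by (intro G1.intro G1_axioms.intro) auto
    interpret G1 V E f Q g by (rule G1)
    obtain \<tau> where t: "monoS \<tau> C" "NCp \<tau> C" using tau_exists by blast
    interpret G2 V E f Q g \<tau> using G1 t by (intro G2.intro G2_axioms.intro) auto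
    obtain X where X: "\<forall>j<f. Xok j (X j)" using X_exists by blast
    interpret G3 V E f Q g \<tau> X using X by (intro G3.intro G3_axioms.intro G2_axioms) auto
    show ?thesis by (rule g1p)
  qed
qed


end
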